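(* Let $(M,\omega)$ be a $2$-dimensional symplectic manifold, $F\colon M\to\mathbb{R}$ smooth, $p$ a nondegenerate hyperbolic singular point of $F$, and $Z$ a neighbourhood of $p$ with coordinates $(x,y)$ identifying $Z$ with $\{|x|<\varepsilon,\ |y|<\varepsilon,\ |xy|<\eta\}$ ($0<\eta<\varepsilon^2$), $p\mapsto(0,0)$, such that $\omega=dx\wedge dy$ and the leaves of the foliation by level sets of $F$ in $Z$ are the level sets of $xy$. Let $\mathbb{L}$ be a prequantum line bundle with connection of curvature $\omega$, and let $s_0$ be a trivializing section over $Z$ with potential one-form $\tfrac12(x\,dy-y\,dx)$; identify sections over $Z$ with complex functions via $s_0$. For $j=1,2,3,4$ let $Z_j$ be the intersection of $Z$ with the $j$-th open quadrant of $\mathbb{R}^2$, and $I_j=(0,\eta)$ for $j=1,3$, $I_j=(-\eta,0)$ for $j=2,4$. Then: (i) if $\sigma$ is a smooth leafwise flat section over $Z$, there are smooth functions $a_j\colon I_j\to\mathbb{C}$, each analytically flat at $0$ (i.e. extending smoothly to $0$ with all one-sided derivatives at $0$ equal to $0$), such that $\sigma(x,y)=a_j(xy)\,e^{-\frac{i}{2}xy\ln\left|\frac{x}{y}\right|}$ on $Z_j$ for each $j$; (ii) conversely, given four such functions $a_1,\dots,a_4$, the function equal to $a_j(xy)\,e^{-\frac{i}{2}xy\ln\left|\frac{x}{y}\right|}$ on $Z_j$ and to $0$ on the axes $\{xy=0\}$ is a smooth leafwise flat section over $Z$.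
   Context: Potential one-form of a trivialization $s$: $\nabla_X(\psi s)=(X(\psi)-i\psi\Theta(X))s$; curvature $\omega$ means $d\Theta=\omega$. A section is leafwise flat if $\nabla_X\sigma=0$ for all $X$ tangent to the leaves (level sets of $xy$ in $Z$). A nondegenerate hyperbolic singular point is one where $dF=0$ and the Hessian is nondegenerate and indefinite. *)

theory Defs
  imports "HOL-Analysis.Analysis"
begin

fun Ck :: "nat \<Rightarrow> 'a::real_normed_vector set \<Rightarrow> ('a \<Rightarrow> 'b::real_normed_vector) \<Rightarrow> bool" where
  "Ck 0 S f = continuous_on S f"
| "Ck (Suc n) S f = ((\<forall>z\<in>S. f differentiable (at z)) \<and>
      (\<forall>v. Ck n S (\<lambda>z. frechet_derivative f (at z) v)))"

definition smooth_on :: "'a::real_normed_vector set \<Rightarrow> ('a \<Rightarrow> 'b::real_normed_vector) \<Rightarrow> bool" where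
  "smooth_on S f \<longleftrightarrow> (\<forall>n. Ck n S f)"

definition nth_vderiv :: "nat \<Rightarrow> (real \<Rightarrow> 'b::real_normed_vector) \<Rightarrow> real \<Rightarrow> 'b" where
  "nth_vderiv n a = ((\<lambda>g t. vector_derivative g (at t)) ^^ n) a"

text \<open>Analytically flat at 0 (from the side of the interval I): a extends smoothly to 0
  with all one-sided derivatives at 0 equal to 0, i.e. every derivative tends to 0 at 0 within I.\<close>
definition flat_at_0 :: "real set \<Rightarrow> (real \<Rightarrow> complex) \<Rightarrow> bool" where
  "flat_at_0 I a \<longleftrightarrow> (\<forall>n. (nth_vderiv n a \<longlongrightarrow> 0) (at 0 within I))"

definition Zset :: "real \<Rightarrow> real \<Rightarrow> (real \<times> real) set" where
  "Zset \<epsilon> \<eta> = {(x, y). \<bar>x\<bar> < \<epsilon> \<and> \<bar>y\<bar> < \<epsilon> \<and> \<bar>x * y\<bar> < \<eta>}"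

definition quadrant :: "nat \<Rightarrow> (real \<times> real) set" where
  "quadrant j = (if j = 1 then {(x, y). x > 0 \<and> y > 0}
                 else if j = 2 then {(x, y). x < 0 \<and> y > 0}
                 else if j = 3 then {(x, y). x < 0 \<and> y < 0}
                 else if j = 4 then {(x, y). x > 0 \<and> y < 0} else {})"

definition quad_index :: "real \<times> real \<Rightarrow> nat" where
  "quad_index z = (if fst z > 0 \<and> snd z > 0 then 1
                   else if fst z < 0 \<and> snd z > 0 then 2
                   else if fst z < 0 \<and> snd z < 0 then 3 else 4)"

definition Iint :: "real \<Rightarrow> nat \<Rightarrow> real set" where
  "Iint \<eta> j = (if j = 1 \<or> j = 3 then {0<..<\<eta>} else {-\<eta><..<0})"

definition Theta :: "real \<times> real \<Rightarrow> real \<times> real \<Rightarrow> real" where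
  "Theta z v = (fst z * snd v - snd z * fst v) / 2"

text \<open>Covariant derivative in the trivialization: nabla_v (psi s0) = (v(psi) - i psi Theta(v)) s0.\<close>
definition nabla :: "(real \<times> real \<Rightarrow> complex) \<Rightarrow> real \<times> real \<Rightarrow> real \<times> real \<Rightarrow> complex" where
  "nabla \<psi> z v = frechet_derivative \<psi> (at z) v - \<i> * \<psi> z * complex_of_real (Theta z v)"

text \<open>Hamiltonian vector field of xy (w.r.t. dx/\dy, up to sign): spans the tangent lines of the
  leaves (level sets of xy) at every point other than the singular point (0,0), where it vanishes.\<close>
definition leaf_field :: "real \<times> real \<Rightarrow> real \<times> real" where
  "leaf_field z = (fst z, - snd z)"

definition leafwise_flat :: "(real \<times> real) set \<Rightarrow> (real \<times> real \<Rightarrow> complex) \<Rightarrow> bool" where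
  "leafwise_flat S \<sigma> \<longleftrightarrow> (\<forall>z\<in>S. \<forall>t::real. nabla \<sigma> z (t *\<^sub>R leaf_field z) = 0)"

definition model_phase :: "real \<Rightarrow> real \<Rightarrow> complex" where
  "model_phase x y = exp (- (\<i> / 2) * complex_of_real (x * y * ln \<bar>x / y\<bar>))"

end

theory Submission
  imports Defs
begin


lemma frechet_derivative_cong_open:
  assumes "open S" "z \<in> S" "\<And>w. w \<in> S \<Longrightarrow> f w = g w"
  shows "frechet_derivative f (at z) = frechet_derivative g (at z)"
proof -
  have "\<And>D. (f has_derivative D) (at z) \<longleftrightarrow> (g has_derivative D) (at z)"
  proof
    fix D assume "(f has_derivative D) (at z)" 
    then show "(g has_derivative D) (at z)"
      by (rule has_derivative_transform_within_open[OF _ assms(1,2)]) (use assms(3) in auto)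
  next
    fix D assume "(g has_derivative D) (at z)" 
    then show "(f has_derivative D) (at z)"
      by (rule has_derivative_transform_within_open[OF _ assms(1,2)]) (use assms(3) in auto)
  qed
  then show ?thesis unfolding frechet_derivative_def by simp
qed


lemma differentiable_cong_open:
  assumes "open S" "z \<in> S" "\<And>w. w \<in> S \<Longrightarrow> f w = g w"
  shows "f differentiable (at z) \<longleftrightarrow> g differentiable (at z)"
proof
  assume "f differentiable (at z)"
  then obtain D where "(f has_derivative D) (at z)" unfolding differentiable_def by blast
  then have "(g has_derivative D) (at z)"
    by (rule has_derivative_transform_within_open[OF _ assms(1,2)]) (use assms(3) in auto)
  then show "g differentiable (at z)" unfolding differentiable_def by blast
next
  assume "g differentiable (at z)"
  then obtain D where "(g has_derivative D) (at z)" unfolding differentiable_def by blast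
  then have "(f has_derivative D) (at z)"
    by (rule has_derivative_transform_within_open[OF _ assms(1,2)]) (use assms(3) in auto)
  then show "f differentiable (at z)" unfolding differentiable_def by blast
qed

lemma Ck_cong_open:
  assumes "open S" "\<And>w. w \<in> S \<Longrightarrow> f w = g w"
  shows "Ck n S f = Ck n S g"
  using assms(2)
proof (induction n arbitrary: f g)
  case 0
  then show ?case using continuous_on_cong[OF refl, of S f g] by simp
next
  case (Suc n)
  have d: "(\<forall>z\<in>S. f differentiable (at z)) = (\<forall>z\<in>S. g differentiable (at z))"
  proof -
    have "f differentiable (at z) \<longleftrightarrow> g differentiable (at z)" if "z \<in> S" for z
      by (rule differentiable_cong_open[OF assms(1) that]) (rule Suc.prems)
    then show ?thesis by blast
  qed
  have "Ck n S (\<lambda>z. frechet_derivative f (at z) v) = Ck n S (\<lambda>z. frechet_derivative g (at z) v)" for v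
    by (rule Suc.IH) (simp add: frechet_derivative_cong_open[OF assms(1) _ Suc.prems])
  then show ?case using d by (simp only: Ck.simps)
qed

lemma smooth_on_cong_open:
  assumes "open S" "\<And>w. w \<in> S \<Longrightarrow> f w = g w"
  shows "smooth_on S f = smooth_on S g"
  using Ck_cong_open[OF assms] unfolding smooth_on_def by simp

lemma smooth_on_coind:
  assumes A: "\<And>g. P g \<Longrightarrow> continuous_on S g \<and> (\<forall>z\<in>S. g differentiable (at z)) \<and>
              (\<forall>v. P (\<lambda>z. frechet_derivative g (at z) v))"
    and "P f"
  shows "smooth_on S f"
proof -
  have "\<forall>g. P g \<longrightarrow> Ck n S g" for n
  proof (induction n)
    case 0
    show ?case using A by simp
  next
    case (Suc n)
    show ?case
    proof (intro allI impI)
      fix g assume "P g"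
      then have "continuous_on S g \<and> (\<forall>z\<in>S. g differentiable (at z)) \<and>
              (\<forall>v. P (\<lambda>z. frechet_derivative g (at z) v))" by (rule A)
      then show "Ck (Suc n) S g" using Suc.IH by simp
    qed
  qed
  then show ?thesis using assms(2) unfolding smooth_on_def by blast
qed

lemma smooth_on_continuous: "smooth_on S f \<Longrightarrow> continuous_on S f"
proof -
  assume "smooth_on S f" then have "Ck 0 S f" unfolding smooth_on_def by (rule spec)
  then show ?thesis by simp
qed

lemma smooth_on_differentiable: "smooth_on S f \<Longrightarrow> z \<in> S \<Longrightarrow> f differentiable (at z)"
proof -
  assume a: "smooth_on S f" "z \<in> S"
  have "Ck (Suc 0) S f" using a(1) unfolding smooth_on_def by (rule spec)
  then show ?thesis using a(2) by simp
qed

lemma smooth_on_frechet: "smooth_on S f \<Longrightarrow> smooth_on S (\<lambda>z. frechet_derivative f (at z) v)"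
proof -
  assume a: "smooth_on S f"
  have "Ck n S (\<lambda>z. frechet_derivative f (at z) v)" for n
  proof -
    have "Ck (Suc n) S f" using a unfolding smooth_on_def by (rule spec)
    then show ?thesis by simp
  qed
  then show ?thesis unfolding smooth_on_def by blast
qed

lemma smooth_on_has_derivative:
  "smooth_on S f \<Longrightarrow> z \<in> S \<Longrightarrow> (f has_derivative frechet_derivative f (at z)) (at z)"
  using smooth_on_differentiable frechet_derivative_works by blast


lemma smooth_on_empty: "smooth_on {} f"
  by (rule smooth_on_coind[where P="\<lambda>g. True"]) auto

definition HD :: "real set \<Rightarrow> (real \<Rightarrow> 'b::real_normed_vector) \<Rightarrow> bool" where
  "HD I f \<longleftrightarrow> (\<forall>n. \<forall>t\<in>I. nth_vderiv n f differentiable (at t))"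

lemma nth_vderiv_0[simp]: "nth_vderiv 0 f = f"
  by (simp add: nth_vderiv_def)

lemma nth_vderiv_Suc: "nth_vderiv (Suc n) f t = vector_derivative (nth_vderiv n f) (at t)"
  by (simp add: nth_vderiv_def)

lemma nth_vderiv_Suc': "nth_vderiv (Suc n) f = nth_vderiv n (\<lambda>t. vector_derivative f (at t))"
  unfolding nth_vderiv_def by (simp only: funpow_Suc_right o_apply)

lemma nth_vderiv_add: "nth_vderiv (n + k) f = nth_vderiv n (nth_vderiv k f)"
  unfolding nth_vderiv_def by (simp only: funpow_add o_apply)

lemma HD_has_vd:
  "HD I f \<Longrightarrow> t \<in> I \<Longrightarrow> (nth_vderiv n f has_vector_derivative nth_vderiv (Suc n) f t) (at t)"
  unfolding HD_def nth_vderiv_Suc using vector_derivative_works by blast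

lemma nth_vderiv_cong_open:
  assumes "open S" "\<And>w. w \<in> S \<Longrightarrow> f w = g w" "t \<in> S"
  shows "nth_vderiv n f t = nth_vderiv n g t"
  using assms(3)
proof (induction n arbitrary: t)
  case 0 then show ?case using assms by simp
next
  case (Suc n)
  have "\<And>D. (nth_vderiv n f has_vector_derivative D) (at t) \<longleftrightarrow> (nth_vderiv n g has_vector_derivative D) (at t)"
    unfolding has_vector_derivative_def
  proof
    fix D assume "(nth_vderiv n f has_derivative (\<lambda>x. x *\<^sub>R D)) (at t)"
    then show "(nth_vderiv n g has_derivative (\<lambda>x. x *\<^sub>R D)) (at t)"
      by (rule has_derivative_transform_within_open[OF _ assms(1) Suc.prems]) (rule Suc.IH)
  next
    fix D assume "(nth_vderiv n g has_derivative (\<lambda>x. x *\<^sub>R D)) (at t)"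
    then show "(nth_vderiv n f has_derivative (\<lambda>x. x *\<^sub>R D)) (at t)"
      by (rule has_derivative_transform_within_open[OF _ assms(1) Suc.prems]) (simp add: Suc.IH)
  qed
  then show ?case by (simp add: nth_vderiv_Suc vector_derivative_def)
qed

lemma HD_cong_open:
  assumes "open S" "\<And>w. w \<in> S \<Longrightarrow> f w = g w" "HD S f"
  shows "HD S g"
  unfolding HD_def
proof (intro allI ballI)
  fix n t assume t: "t \<in> S"
  have "nth_vderiv n f differentiable (at t)" using assms(3) t unfolding HD_def by blast
  moreover have "\<And>w. w \<in> S \<Longrightarrow> nth_vderiv n f w = nth_vderiv n g w"
    by (rule nth_vderiv_cong_open[OF assms(1,2)])
  ultimately show "nth_vderiv n g differentiable (at t)"
    using differentiable_cong_open[OF assms(1) t] by blast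
qed

lemma HD_subset: "HD I f \<Longrightarrow> J \<subseteq> I \<Longrightarrow> HD J f"
  unfolding HD_def by blast

lemma HD_deriv: "HD I f \<Longrightarrow> HD I (\<lambda>t. vector_derivative f (at t))"
  unfolding HD_def by (simp add: nth_vderiv_Suc'[symmetric])

lemma HD_nth: "HD I f \<Longrightarrow> HD I (nth_vderiv k f)"
  unfolding HD_def by (simp add: nth_vderiv_add[symmetric])

lemma HD_isCont: "HD I f \<Longrightarrow> t \<in> I \<Longrightarrow> isCont (nth_vderiv n f) t"
  unfolding HD_def using differentiable_imp_continuous_within by blast

lemma frechet_vd:
  fixes f :: "real \<Rightarrow> 'b::real_normed_vector"
  assumes "f differentiable (at t)"
  shows "frechet_derivative f (at t) v = v *\<^sub>R vector_derivative f (at t)"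
proof -
  have "(f has_vector_derivative vector_derivative f (at t)) (at t)"
    using assms vector_derivative_works by blast
  then have "(f has_derivative (\<lambda>h. h *\<^sub>R vector_derivative f (at t))) (at t)"
    unfolding has_vector_derivative_def .
  then have "frechet_derivative f (at t) = (\<lambda>h. h *\<^sub>R vector_derivative f (at t))"
    by (rule frechet_derivative_at[symmetric])
  then show ?thesis by simp
qed

lemma smooth_imp_HD:
  fixes f :: "real \<Rightarrow> 'b::real_normed_vector"
  assumes "open I" "smooth_on I f" shows "HD I f"
proof -
  have "smooth_on I (nth_vderiv n f)" for n
  proof (induction n)
    case 0 then show ?case using assms by simp
  next
    case (Suc n)
    have "smooth_on I (\<lambda>t. frechet_derivative (nth_vderiv n f) (at t) 1)"
      using smooth_on_frechet[OF Suc] .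
    moreover have "\<And>t. t \<in> I \<Longrightarrow> frechet_derivative (nth_vderiv n f) (at t) 1 = nth_vderiv (Suc n) f t"
      using frechet_vd[OF smooth_on_differentiable[OF Suc], of _ 1] by (simp add: nth_vderiv_Suc)
    ultimately show ?case by (subst (asm) smooth_on_cong_open[OF assms(1)]) 
  qed
  then show ?thesis unfolding HD_def by (intro allI ballI smooth_on_differentiable)
qed

lemma HD_imp_smooth:
  fixes f :: "real \<Rightarrow> complex"
  assumes "open I" "HD I f" shows "smooth_on I f"
proof (rule smooth_on_coind[where P="\<lambda>g. \<exists>n c. \<forall>t\<in>I. g t = c * nth_vderiv n f t"])
  fix g assume "\<exists>n c. \<forall>t\<in>I. g t = c * nth_vderiv n f t"
  then obtain n c where g: "\<And>t. t\<in>I \<Longrightarrow> g t = c * nth_vderiv n f t" by blast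
  have hg: "(g has_vector_derivative c * nth_vderiv (Suc n) f t) (at t)" if t: "t \<in> I" for t
  proof -
    have "((\<lambda>t. c * nth_vderiv n f t) has_vector_derivative c * nth_vderiv (Suc n) f t) (at t)"
      using HD_has_vd[OF assms(2) t] by (rule has_vector_derivative_mult_right)
    then show ?thesis unfolding has_vector_derivative_def
      by (rule has_derivative_transform_within_open[OF _ assms(1) t]) (simp add: g)
  qed
  have diff: "\<forall>z\<in>I. g differentiable (at z)"
  proof
    fix z assume "z \<in> I" from hg[OF this] show "g differentiable (at z)"
      unfolding has_vector_derivative_def differentiable_def by blast
  qed
  moreover have "continuous_on I g"
    by (intro continuous_at_imp_continuous_on ballI differentiable_imp_continuous_within) (use diff in blast)
  moreover have "\<exists>n c. \<forall>t\<in>I. frechet_derivative g (at t) v = c * nth_vderiv n f t" for v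
  proof (intro exI ballI)
    fix t assume t: "t \<in> I"
    have "frechet_derivative g (at t) v = v *\<^sub>R vector_derivative g (at t)"
      using diff t by (intro frechet_vd) blast
    also have "\<dots> = v *\<^sub>R (c * nth_vderiv (Suc n) f t)"
      using vector_derivative_at[OF hg[OF t]] by simp
    finally show "frechet_derivative g (at t) v = (of_real v * c) * nth_vderiv (Suc n) f t"
      by (simp add: scaleR_conv_of_real)
  qed
  ultimately show "continuous_on I g \<and> (\<forall>z\<in>I. g differentiable (at z)) \<and>
      (\<forall>v. \<exists>n c. \<forall>t\<in>I. frechet_derivative g (at t) v = c * nth_vderiv n f t)" by blast
next
  show "\<exists>n c. \<forall>t\<in>I. f t = c * nth_vderiv n f t" by (rule exI[of _ 0], rule exI[of _ 1]) simp
qed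




lemma vd_of_real:
  "(\<theta> has_real_derivative d) (at t) \<Longrightarrow> ((\<lambda>t. complex_of_real (\<theta> t)) has_vector_derivative of_real d) (at t)"
  unfolding has_real_derivative_iff_has_vector_derivative
  by (rule bounded_linear.has_vector_derivative[OF bounded_linear_of_real])

lemma vd_exp:
  fixes h :: "real \<Rightarrow> complex"
  assumes "(h has_vector_derivative h') (at t)"
  shows "((\<lambda>t. exp (h t)) has_vector_derivative exp (h t) * h') (at t)"
proof -
  have "((exp \<circ> h) has_vector_derivative (h' * exp (h t))) (at t)"
    by (rule field_vector_diff_chain_at[OF assms DERIV_exp])
  then show ?thesis by (simp add: o_def mult.commute)
qed

lemma Suc_choose': "Suc n choose k = (n choose k) + (if k = 0 then 0 else (n choose (k-1)))"
  by (cases k) simp_all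

lemma leibniz:
  fixes f g :: "real \<Rightarrow> complex"
  assumes S: "open S" and f: "HD S f" and g: "HD S g"
  shows "t \<in> S \<Longrightarrow> nth_vderiv n (\<lambda>t. f t * g t) t =
     (\<Sum>i = 0..n. of_nat (n choose i) * nth_vderiv i f t * nth_vderiv (n-i) g t)"
proof (induction n arbitrary: t)
  case 0 then show ?case by simp
next
  case (Suc n t)
  have sumeq: "(\<Sum>i = 0..n.
               of_nat (n choose i) * (nth_vderiv (Suc i) f t * nth_vderiv (n-i) g t + nth_vderiv (Suc (n-i)) g t * nth_vderiv i f t)) =
            g t * nth_vderiv (Suc n) f t + (\<Sum>i = 0..n. nth_vderiv i f t * (of_nat (Suc n choose i) * nth_vderiv (Suc n - i) g t))"
    apply (simp add: Suc_choose' algebra_simps sum.distrib)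
    apply (subst (4) sum_Suc_reindex)
    apply (auto simp: algebra_simps Suc_diff_le intro: sum.cong)
    done
  have D: "((\<lambda>t. \<Sum>i = 0..n. of_nat (n choose i) * nth_vderiv i f t * nth_vderiv (n-i) g t) has_vector_derivative
     (\<Sum>i = 0..n. of_nat (n choose i) * (nth_vderiv i f t * nth_vderiv (Suc (n-i)) g t + nth_vderiv (Suc i) f t * nth_vderiv (n-i) g t))) (at t)"
    apply (rule has_vector_derivative_sum)
    apply (simp only: mult.assoc)
    apply (rule has_vector_derivative_mult_right)
    apply (rule has_vector_derivative_mult)
    using HD_has_vd[OF f Suc.prems] HD_has_vd[OF g Suc.prems] by auto
  have D2: "(nth_vderiv n (\<lambda>t. f t * g t) has_vector_derivative
     (\<Sum>i = 0..n. of_nat (n choose i) * (nth_vderiv i f t * nth_vderiv (Suc (n-i)) g t + nth_vderiv (Suc i) f t * nth_vderiv (n-i) g t))) (at t)"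
    using D unfolding has_vector_derivative_def
    by (rule has_derivative_transform_within_open[OF _ S Suc.prems]) (simp add: Suc.IH)
  have "nth_vderiv (Suc n) (\<lambda>t. f t * g t) t =
     (\<Sum>i = 0..n. of_nat (n choose i) * (nth_vderiv i f t * nth_vderiv (Suc (n-i)) g t + nth_vderiv (Suc i) f t * nth_vderiv (n-i) g t))"
    using vector_derivative_at[OF D2] by (simp add: nth_vderiv_Suc)
  also have "\<dots> = g t * nth_vderiv (Suc n) f t + (\<Sum>i = 0..n. nth_vderiv i f t * (of_nat (Suc n choose i) * nth_vderiv (Suc n - i) g t))"
    using sumeq by (simp add: algebra_simps)
  also have "\<dots> = (\<Sum>i = 0..Suc n. of_nat (Suc n choose i) * nth_vderiv i f t * nth_vderiv (Suc n - i) g t)"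
    by (simp add: algebra_simps)
  finally show ?case .
qed

lemma HD_mult:
  fixes f g :: "real \<Rightarrow> complex"
  assumes S: "open S" and f: "HD S f" and g: "HD S g"
  shows "HD S (\<lambda>t. f t * g t)"
  unfolding HD_def
proof (intro allI ballI)
  fix n t assume t: "t \<in> S"
  have D: "((\<lambda>t. \<Sum>i = 0..n. of_nat (n choose i) * nth_vderiv i f t * nth_vderiv (n-i) g t) has_vector_derivative
     (\<Sum>i = 0..n. of_nat (n choose i) * (nth_vderiv i f t * nth_vderiv (Suc (n-i)) g t + nth_vderiv (Suc i) f t * nth_vderiv (n-i) g t))) (at t)"
    apply (rule has_vector_derivative_sum)
    apply (simp only: mult.assoc)
    apply (rule has_vector_derivative_mult_right)
    apply (rule has_vector_derivative_mult)
    using HD_has_vd[OF f t] HD_has_vd[OF g t] by auto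
  then have "(nth_vderiv n (\<lambda>t. f t * g t) has_vector_derivative
     (\<Sum>i = 0..n. of_nat (n choose i) * (nth_vderiv i f t * nth_vderiv (Suc (n-i)) g t + nth_vderiv (Suc i) f t * nth_vderiv (n-i) g t))) (at t)"
    unfolding has_vector_derivative_def
    by (rule has_derivative_transform_within_open[OF _ S t]) (simp add: leibniz[OF S f g])
  then show "nth_vderiv n (\<lambda>t. f t * g t) differentiable (at t)"
    unfolding has_vector_derivative_def differentiable_def by blast
qed

lemma nth_vderiv_exp_lin:
  fixes c :: complex shows "nth_vderiv n (\<lambda>t. exp (of_real t * c)) = (\<lambda>t. c ^ n * exp (of_real t * c))"
proof (induction n)
  case 0 then show ?case by simp
next
  case (Suc n)
  have "((\<lambda>t. c ^ n * exp (complex_of_real t * c)) has_vector_derivative c ^ Suc n * exp (of_real t * c)) (at t)" for t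
  proof -
    have "((\<lambda>t. complex_of_real t * c) has_vector_derivative 1 * c) (at t)"
      by (rule has_vector_derivative_mult_left) (use vd_of_real[OF DERIV_ident[of "at t"]] in simp)
    from vd_exp[OF this] show ?thesis
      by (auto intro!: has_vector_derivative_mult_right[THEN has_vector_derivative_eq_rhs] simp: algebra_simps)
  qed
  then show ?case by (simp add: nth_vderiv_Suc Suc vector_derivative_at fun_eq_iff)
qed

lemma HD_exp_lin: fixes c :: complex shows "HD S (\<lambda>t. exp (of_real t * c))"
proof -
  have "((\<lambda>t. c ^ n * exp (complex_of_real t * c)) has_vector_derivative c ^ Suc n * exp (of_real t * c)) (at t)" for t n
  proof -
    have "((\<lambda>t. complex_of_real t * c) has_vector_derivative 1 * c) (at t)"
      by (rule has_vector_derivative_mult_left) (use vd_of_real[OF DERIV_ident[of "at t"]] in simp)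
    from vd_exp[OF this] show ?thesis
      by (auto intro!: has_vector_derivative_mult_right[THEN has_vector_derivative_eq_rhs] simp: algebra_simps)
  qed
  then show ?thesis unfolding HD_def nth_vderiv_exp_lin differentiable_def has_vector_derivative_def by blast
qed




definition side :: "real set \<Rightarrow> real \<Rightarrow> bool" where
  "side S \<delta> \<longleftrightarrow> \<delta> > 0 \<and> (S = {0<..<\<delta>} \<or> S = {-\<delta><..<0})"

lemma side_open: "side S \<delta> \<Longrightarrow> open S"
  unfolding side_def by auto

lemma side_convex: "side S \<delta> \<Longrightarrow> convex S"
  unfolding side_def by (auto simp: convex_real_interval)

lemma side_nz: "side S \<delta> \<Longrightarrow> t \<in> S \<Longrightarrow> t \<noteq> 0 \<and> \<bar>t\<bar> < \<delta>"
  unfolding side_def by auto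

lemma side_restrict: "side S \<delta> \<Longrightarrow> d > 0 \<Longrightarrow> side (S \<inter> {-d<..<d}) (min \<delta> d)"
  unfolding side_def
proof (elim conjE disjE)
  assume "\<delta> > 0" "d > 0" "S = {0<..<\<delta>}"
  then show "0 < min \<delta> d \<and> (S \<inter> {- d<..<d} = {0<..<min \<delta> d} \<or> S \<inter> {- d<..<d} = {- min \<delta> d<..<0})"
    by auto
next
  assume "\<delta> > 0" "d > 0" "S = {-\<delta><..<0}"
  then show "0 < min \<delta> d \<and> (S \<inter> {- d<..<d} = {0<..<min \<delta> d} \<or> S \<inter> {- d<..<d} = {- min \<delta> d<..<0})"
    by auto
qed

lemma side_limpt: "side S \<delta> \<Longrightarrow> 0 islimpt S"
  unfolding side_def
proof (elim conjE disjE)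
  assume "\<delta> > 0" "S = {0<..<\<delta>}" then show ?thesis using islimpt_greaterThanLessThan1[of 0 \<delta>] by simp
next
  assume "\<delta> > 0" "S = {-\<delta><..<0}" then show ?thesis using islimpt_greaterThanLessThan2[of "-\<delta>" 0] by simp
qed

lemma side_nontriv: "side S \<delta> \<Longrightarrow> at 0 within S \<noteq> bot"
  using side_limpt trivial_limit_within by blast

lemma side_eventually: "side S \<delta> \<Longrightarrow> d > 0 \<Longrightarrow> eventually (\<lambda>u. u \<in> S \<and> \<bar>u\<bar> < d) (at 0 within S)"
  unfolding eventually_at by (rule exI[of _ d]) auto

lemma mvt_side:
  fixes f :: "real \<Rightarrow> 'b::real_normed_vector"
  assumes S: "side S \<delta>"
   and D: "\<And>t. t\<in>S \<Longrightarrow> (f has_vector_derivative f' t) (at t)"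
   and lim: "(f \<longlongrightarrow> 0) (at 0 within S)"
   and B: "\<And>t. t\<in>S \<Longrightarrow> norm (f' t) \<le> M * \<bar>t\<bar>^k"
   and t: "t \<in> S"
  shows "norm (f t) \<le> M * \<bar>t\<bar>^Suc k"
proof -
  have tnz: "t \<noteq> 0" using side_nz[OF S t] by blast
  have M0: "0 \<le> M * \<bar>t\<bar>^k" using B[OF t] norm_ge_zero order_trans by blast
  have "\<bar>t\<bar>^k > 0" using tnz by simp
  then have M0': "0 \<le> M" using M0 by (metis not_less zero_le_mult_iff)
  have main: "norm (f t - f u) \<le> M * \<bar>t\<bar>^k * norm (t - u)" if u: "u \<in> S" "\<bar>u\<bar> \<le> \<bar>t\<bar>" for u
  proof -
    have seg: "closed_segment t u \<subseteq> S"
      using side_convex[OF S] t u(1) by (simp add: closed_segment_subset)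
    have xb: "\<bar>x\<bar> \<le> \<bar>t\<bar>" if "x \<in> closed_segment t u" for x
    proof -
      have "(0<t \<and> 0<u) \<or> (t<0 \<and> u<0)"
        using S t u(1) unfolding side_def by auto
      then show ?thesis
      proof
        assume a: "0<t \<and> 0<u"
        then have "u \<le> t" using u(2) by simp
        then have "x \<in> {u..t}" using that by (auto simp: closed_segment_eq_real_ivl split: if_splits)
        then show ?thesis using a by simp
      next
        assume a: "t<0 \<and> u<0"
        then have "t \<le> u" using u(2) by simp
        then have "x \<in> {t..u}" using that by (auto simp: closed_segment_eq_real_ivl split: if_splits)
        then show ?thesis using a by simp
      qed
    qed
    show ?thesis
    proof (rule differentiable_bound[of "closed_segment t u" f "\<lambda>x h. h *\<^sub>R f' x"])
      show "convex (closed_segment t u)" by simp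
      show "(f has_derivative (\<lambda>h. h *\<^sub>R f' x)) (at x within closed_segment t u)"
        if "x \<in> closed_segment t u" for x
      proof -
        have "x \<in> S" using seg that by blast
        then have "(f has_derivative (\<lambda>h. h *\<^sub>R f' x)) (at x)"
          using D[of x] unfolding has_vector_derivative_def by blast
        then show ?thesis by (rule has_derivative_at_withinI)
      qed
      show "onorm (\<lambda>h. h *\<^sub>R f' x) \<le> M * \<bar>t\<bar> ^ k" if x: "x \<in> closed_segment t u" for x
      proof (rule onorm_bound[OF M0])
        fix h :: real
        have "norm (f' x) \<le> M * \<bar>x\<bar>^k" using B[of x] seg x by blast
        also have "\<dots> \<le> M * \<bar>t\<bar>^k"
          by (intro mult_left_mono power_mono xb x M0') simp_all
        finally show "norm (h *\<^sub>R f' x) \<le> M * \<bar>t\<bar> ^ k * norm h"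
          by (simp add: mult_left_mono[OF _ abs_ge_zero] mult.commute)
      qed
      show "t \<in> closed_segment t u" by (rule ends_in_segment)
      show "u \<in> closed_segment t u" by (rule ends_in_segment)
    qed
  qed
  have "norm (f t - 0) \<le> M * \<bar>t\<bar>^k * norm (t - 0)"
  proof (rule tendsto_le[OF side_nontriv[OF S]])
    show "((\<lambda>u. norm (f t - f u)) \<longlongrightarrow> norm (f t - 0)) (at 0 within S)"
      by (intro tendsto_intros lim)
    show "((\<lambda>u. M * \<bar>t\<bar>^k * norm (t - u)) \<longlongrightarrow> M * \<bar>t\<bar>^k * norm (t - 0)) (at 0 within S)"
      by (intro tendsto_intros)
    show "eventually (\<lambda>u. norm (f t - f u) \<le> M * \<bar>t\<bar>^k * norm (t - u)) (at 0 within S)"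
    proof (rule eventually_mono[OF side_eventually[OF S, of "\<bar>t\<bar>"]])
      show "0 < \<bar>t\<bar>" using tnz by simp
      fix u assume "u \<in> S \<and> \<bar>u\<bar> < \<bar>t\<bar>"
      then show "norm (f t - f u) \<le> M * \<bar>t\<bar>^k * norm (t - u)" using main by simp
    qed
  qed
  then show ?thesis by (simp add: mult_ac)
qed


lemma mvt_iter:
  fixes D :: "nat \<Rightarrow> real \<Rightarrow> 'b::real_normed_vector"
  assumes S: "side S \<delta>"
   and DD: "\<And>k t. t\<in>S \<Longrightarrow> (D k has_vector_derivative D (Suc k) t) (at t)"
   and lim: "\<And>k. k < n \<Longrightarrow> (D k \<longlongrightarrow> 0) (at 0 within S)"
   and B: "\<And>t. t\<in>S \<Longrightarrow> norm (D n t) \<le> M"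
  shows "k \<le> n \<Longrightarrow> t \<in> S \<Longrightarrow> norm (D k t) \<le> M * \<bar>t\<bar>^(n - k)"
proof -
  have "\<forall>k t. n - k = d \<longrightarrow> k \<le> n \<longrightarrow> t \<in> S \<longrightarrow> norm (D k t) \<le> M * \<bar>t\<bar>^(n - k)" for d
  proof (induction d)
    case 0
    show ?case
    proof (intro allI impI)
      fix k t assume "n - k = 0" "k \<le> n" "t \<in> S"
      then have "k = n" by simp
      then show "norm (D k t) \<le> M * \<bar>t\<bar>^(n - k)" using B \<open>t \<in> S\<close> by simp
    qed
  next
    case (Suc d)
    show ?case
    proof (intro allI impI)
      fix k t assume a: "n - k = Suc d" "k \<le> n" "t \<in> S"
      have "norm (D k t) \<le> M * \<bar>t\<bar>^Suc (n - Suc k)"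
      proof (rule mvt_side[OF S _ _ _ a(3)])
        show "\<And>t. t \<in> S \<Longrightarrow> (D k has_vector_derivative D (Suc k) t) (at t)" using DD by blast
        have "k < n" using a by simp
        then show "(D k \<longlongrightarrow> 0) (at 0 within S)" by (rule lim)
        fix u assume "u \<in> S"
        moreover have "n - Suc k = d" "Suc k \<le> n" using a by simp_all
        ultimately show "norm (D (Suc k) u) \<le> M * \<bar>u\<bar> ^ (n - Suc k)"
          using Suc.IH by blast
      qed
      moreover have "Suc (n - Suc k) = n - k" using a by simp
      ultimately show "norm (D k t) \<le> M * \<bar>t\<bar>^(n - k)" by simp
    qed
  qed
  then show "k \<le> n \<Longrightarrow> t \<in> S \<Longrightarrow> norm (D k t) \<le> M * \<bar>t\<bar>^(n - k)" by blast
qed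

lemma isCont_bounded_near:
  fixes g :: "real \<Rightarrow> 'b::real_normed_vector"
  assumes "isCont g x"
  shows "\<exists>M d. d > 0 \<and> (\<forall>t. \<bar>t - x\<bar> < d \<longrightarrow> norm (g t) \<le> M)"
proof -
  obtain d where d: "d > 0" "\<And>t. dist t x < d \<Longrightarrow> dist (g t) (g x) < 1"
    using assms unfolding continuous_at_eps_delta by (meson zero_less_one)
  have "norm (g t) \<le> norm (g x) + 1" if "\<bar>t - x\<bar> < d" for t
  proof -
    have "dist (g t) (g x) < 1" using d(2)[of t] that by (simp add: dist_real_def)
    then show ?thesis using norm_triangle_ineq2[of "g t" "g x"] by (simp add: dist_norm)
  qed
  then show ?thesis using d(1) by blast
qed

lemma flat_pow_bound:
  fixes f :: "real \<Rightarrow> 'b::real_normed_vector"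
  assumes S: "side S \<delta>" and hd: "HD S f"
    and lim: "\<And>k. (nth_vderiv k f \<longlongrightarrow> 0) (at 0 within S)"
  shows "\<exists>d>0. \<forall>t\<in>S. \<bar>t\<bar> < d \<longrightarrow> norm (nth_vderiv k f t) \<le> \<bar>t\<bar>^N"
proof -
  have "eventually (\<lambda>t. norm (nth_vderiv (N + k) f t) < 1) (at 0 within S)"
    using lim[of "N+k"] unfolding tendsto_iff by (auto simp: dist_norm)
  then obtain d where d: "d > 0" and d2: "\<forall>t\<in>S. t \<noteq> 0 \<and> dist t 0 < d \<longrightarrow> norm (nth_vderiv (N + k) f t) < 1"
    unfolding eventually_at by (elim exE conjE) (rule that)
  define S' where "S' = S \<inter> {-d<..<d}"
  have S': "side S' (min \<delta> d)" unfolding S'_def by (rule side_restrict[OF S d(1)])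
  have "norm (nth_vderiv (0 + k) f t) \<le> 1 * \<bar>t\<bar>^(N - 0)" if t: "t \<in> S'" for t
  proof (rule mvt_iter[OF S', of "\<lambda>j. nth_vderiv (j + k) f" N 1 0 t])
    show "(nth_vderiv (j + k) f has_vector_derivative nth_vderiv (Suc j + k) f u) (at u)"
      if "u \<in> S'" for j u using HD_has_vd[OF hd] that unfolding S'_def by simp
    show "(nth_vderiv (j + k) f \<longlongrightarrow> 0) (at 0 within S')" for j
      using lim[of "j+k"] unfolding S'_def by (rule tendsto_within_subset) simp
    show "norm (nth_vderiv (N + k) f u) \<le> 1" if u: "u \<in> S'" for u
    proof -
      have "u \<noteq> 0" using side_nz[OF S' u] by blast
      moreover have "u \<in> S" "dist u 0 < d" using u unfolding S'_def by auto
      ultimately show ?thesis using d2 by fastforce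
    qed
  qed (use t in simp_all)
  then show ?thesis using d(1) unfolding S'_def by (intro exI[of _ d]) (auto simp: abs_less_iff)
qed




lemma DERIV_lnabs:
  fixes t :: real assumes "t \<noteq> 0"
  shows "((\<lambda>t. ln \<bar>t\<bar>) has_real_derivative inverse t) (at t)"
proof (cases "t > 0")
  case True
  have "(ln has_real_derivative inverse t) (at t)" by (rule DERIV_ln[OF True])
  then show ?thesis
    by (rule has_field_derivative_transform_within_open[where S="{0<..}"]) (use True in auto)
next
  case False
  then have tn: "t < 0" using assms by simp
  have "((\<lambda>u. ln (- u)) has_real_derivative inverse (- t) * (- 1)) (at t)"
    by (rule DERIV_chain'[of "\<lambda>u. - u"]) (auto intro!: derivative_eq_intros DERIV_ln[of "-t"] simp: tn divide_inverse)
  then have "((\<lambda>u. ln (- u)) has_real_derivative inverse t) (at t)" by simp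
  then show ?thesis
    by (rule has_field_derivative_transform_within_open[where S="{..<0}"]) (use tn in auto)
qed

lemma DERIV_tlnabs:
  fixes t :: real assumes "t \<noteq> 0"
  shows "((\<lambda>t. t * ln \<bar>t\<bar>) has_real_derivative ln \<bar>t\<bar> + 1) (at t)"
proof -
  have "((\<lambda>t. t * ln \<bar>t\<bar>) has_real_derivative t * inverse t + 1 * ln \<bar>t\<bar>) (at t)"
    by (rule DERIV_mult'[OF DERIV_ident DERIV_lnabs[OF assms]])
  then show ?thesis using assms by (simp add: add.commute)
qed

fun evalp :: "(complex \<times> nat \<times> nat) list \<Rightarrow> real \<Rightarrow> complex" where
  "evalp [] t = 0"
| "evalp ((c,p,r)#ps) t = c * of_real (inverse t ^ p * ln \<bar>t\<bar> ^ r) + evalp ps t"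

fun dp :: "(complex \<times> nat \<times> nat) list \<Rightarrow> (complex \<times> nat \<times> nat) list" where
  "dp [] = []"
| "dp ((c,p,r)#ps) = (c * of_nat r, Suc p, r - 1) # (- c * of_nat p, Suc p, r) # dp ps"

lemma evalp_append[simp]: "evalp (ps @ qs) t = evalp ps t + evalp qs t"
  by (induction ps rule: dp.induct) auto

fun mth :: "real \<Rightarrow> real \<Rightarrow> (complex \<times> nat \<times> nat) list \<Rightarrow> (complex \<times> nat \<times> nat) list" where
  "mth a b [] = []"
| "mth a b ((c,p,r)#ps) = (\<i> * of_real (a + b) * c, p, r) # (\<i> * of_real b * c, p, Suc r) # mth a b ps"

fun PP :: "real \<Rightarrow> real \<Rightarrow> nat \<Rightarrow> (complex \<times> nat \<times> nat) list" where
  "PP a b 0 = [(1,0,0)]"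
| "PP a b (Suc m) = dp (PP a b m) @ mth a b (PP a b m)"

lemma evalp_mth: "evalp (mth a b ps) t = evalp ps t * (\<i> * of_real (a + b + b * ln \<bar>t\<bar>))"
  by (induction ps rule: dp.induct) (auto simp: algebra_simps)

lemma mono_deriv:
  fixes t :: real assumes t: "t \<noteq> 0"
  shows "((\<lambda>t. inverse t ^ p * ln \<bar>t\<bar> ^ r) has_real_derivative
     (of_nat r * inverse t ^ Suc p * ln \<bar>t\<bar> ^ (r - 1) - of_nat p * inverse t ^ Suc p * ln \<bar>t\<bar> ^ r)) (at t)"
  apply (rule DERIV_cong[OF DERIV_mult'[OF DERIV_power[OF DERIV_inverse[OF t]] DERIV_power[OF DERIV_lnabs[OF t]]]])
  apply (cases p; cases r; simp add: algebra_simps)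
  done

lemma evalp_vd:
  fixes t :: real assumes t: "t \<noteq> 0"
  shows "((\<lambda>t. evalp ps t) has_vector_derivative evalp (dp ps) t) (at t)"
proof (induction ps rule: dp.induct)
  case 1 then show ?case by simp
next
  case (2 c p r ps)
  have "((\<lambda>t. c * complex_of_real (inverse t ^ p * ln \<bar>t\<bar> ^ r)) has_vector_derivative
     c * of_real (of_nat r * inverse t ^ Suc p * ln \<bar>t\<bar> ^ (r - 1) - of_nat p * inverse t ^ Suc p * ln \<bar>t\<bar> ^ r)) (at t)"
    by (rule has_vector_derivative_mult_right, rule vd_of_real, rule mono_deriv[OF t])
  from has_vector_derivative_add[OF this 2] show ?case
    by (simp add: algebra_simps)
qed

definition EE :: "real \<Rightarrow> real \<Rightarrow> real \<Rightarrow> complex" where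
  "EE a b t = exp (\<i> * of_real (a * t + b * (t * ln \<bar>t\<bar>)))"

lemma EE_vd:
  fixes t :: real assumes t: "t \<noteq> 0"
  shows "(EE a b has_vector_derivative EE a b t * (\<i> * of_real (a + b + b * ln \<bar>t\<bar>))) (at t)"
proof -
  have "((\<lambda>t. a * t + b * (t * ln \<bar>t\<bar>)) has_real_derivative a * 1 + b * (ln \<bar>t\<bar> + 1)) (at t)"
    by (intro DERIV_add DERIV_cmult DERIV_ident DERIV_tlnabs[OF t])
  then have "((\<lambda>t. \<i> * of_real (a * t + b * (t * ln \<bar>t\<bar>))) has_vector_derivative
       \<i> * of_real (a * 1 + b * (ln \<bar>t\<bar> + 1))) (at t)"
    by (intro has_vector_derivative_mult_right vd_of_real)
  from vd_exp[OF this] show ?thesis unfolding EE_def by (simp add: algebra_simps)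
qed

lemma EE_nth:
  assumes I: "open I" "0 \<notin> I"
  shows "t \<in> I \<Longrightarrow> nth_vderiv m (EE a b) t = evalp (PP a b m) t * EE a b t"
proof (induction m arbitrary: t)
  case 0 then show ?case by simp
next
  case (Suc m t)
  have t: "t \<noteq> 0" using Suc.prems I by auto
  have "((\<lambda>t. evalp (PP a b m) t * EE a b t) has_vector_derivative
      evalp (PP a b m) t * (EE a b t * (\<i> * of_real (a + b + b * ln \<bar>t\<bar>))) + evalp (dp (PP a b m)) t * EE a b t) (at t)"
    by (rule has_vector_derivative_mult[OF evalp_vd[OF t] EE_vd[OF t]])
  then have "(nth_vderiv m (EE a b) has_vector_derivative
      evalp (PP a b m) t * (EE a b t * (\<i> * of_real (a + b + b * ln \<bar>t\<bar>))) + evalp (dp (PP a b m)) t * EE a b t) (at t)"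
    unfolding has_vector_derivative_def
    by (rule has_derivative_transform_within_open[OF _ I(1) Suc.prems]) (simp add: Suc.IH)
  then show ?case
    by (simp add: nth_vderiv_Suc vector_derivative_at evalp_mth algebra_simps)
qed

lemma HD_EE:
  assumes I: "open I" "0 \<notin> I"
  shows "HD I (EE a b)"
  unfolding HD_def
proof (intro allI ballI)
  fix m t assume tI: "t \<in> I"
  have t: "t \<noteq> 0" using tI I by auto
  have "((\<lambda>t. evalp (PP a b m) t * EE a b t) has_vector_derivative
      evalp (PP a b m) t * (EE a b t * (\<i> * of_real (a + b + b * ln \<bar>t\<bar>))) + evalp (dp (PP a b m)) t * EE a b t) (at t)"
    by (rule has_vector_derivative_mult[OF evalp_vd[OF t] EE_vd[OF t]])
  then have "(nth_vderiv m (EE a b) has_vector_derivative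
      evalp (PP a b m) t * (EE a b t * (\<i> * of_real (a + b + b * ln \<bar>t\<bar>))) + evalp (dp (PP a b m)) t * EE a b t) (at t)"
    unfolding has_vector_derivative_def
    by (rule has_derivative_transform_within_open[OF _ I(1) tI]) (simp add: EE_nth[OF I])
  then show "nth_vderiv m (EE a b) differentiable (at t)"
    unfolding has_vector_derivative_def differentiable_def by blast
qed

lemma norm_EE[simp]: "norm (EE a b t) = 1"
  unfolding EE_def by (simp add: norm_exp_i_times)




lemma logpow_bound:
  fixes t :: real assumes t: "0 < \<bar>t\<bar>" "\<bar>t\<bar> \<le> 1"
  shows "\<bar>t\<bar> * \<bar>ln \<bar>t\<bar>\<bar>^r \<le> real r ^ r"
proof (cases "r = 0")
  case True then show ?thesis using t by simp
next
  case False
  define y where "y = - ln \<bar>t\<bar>"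
  have y0: "0 \<le> y" unfolding y_def using t by simp
  have ey: "exp y = inverse \<bar>t\<bar>" unfolding y_def using t by (simp add: exp_minus)
  have l: "\<bar>ln \<bar>t\<bar>\<bar> = y" unfolding y_def using t by simp
  have "(1 + y / real r) ^ r \<le> exp y"
    by (rule exp_ge_one_plus_x_over_n_power_n) (use y0 False in auto)
  moreover have "y ^ r = real r ^ r * (y / real r) ^ r"
    using False by (simp add: power_divide)
  moreover have "(y / real r) ^ r \<le> (1 + y / real r) ^ r"
    by (rule power_mono) (use y0 in auto)
  ultimately have "y ^ r \<le> real r ^ r * inverse \<bar>t\<bar>"
    by (metis ey mult_left_mono order_trans zero_le_power of_nat_0_le_iff)
  then have "\<bar>t\<bar> * y ^ r \<le> \<bar>t\<bar> * (real r ^ r * inverse \<bar>t\<bar>)"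
    by (rule mult_left_mono) simp
  also have "\<dots> = real r ^ r" using t by simp
  finally show ?thesis using l by simp
qed

lemma logpow_bound':
  fixes t :: real assumes t: "0 < \<bar>t\<bar>" "\<bar>t\<bar> \<le> 1"
  shows "\<bar>ln \<bar>t\<bar>\<bar>^r \<le> real r ^ r * inverse \<bar>t\<bar>"
proof -
  have "\<bar>ln \<bar>t\<bar>\<bar>^r = inverse \<bar>t\<bar> * (\<bar>t\<bar> * \<bar>ln \<bar>t\<bar>\<bar>^r)" using t by simp
  also have "\<dots> \<le> inverse \<bar>t\<bar> * real r ^ r"
    by (rule mult_left_mono[OF logpow_bound[OF t]]) simp
  finally show ?thesis by (simp add: mult.commute)
qed

lemma inv_pow_mono:
  fixes t :: real assumes t: "0 < \<bar>t\<bar>" "\<bar>t\<bar> \<le> 1" and "a \<le> K"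
  shows "inverse \<bar>t\<bar> ^ a \<le> inverse \<bar>t\<bar> ^ K"
  by (rule power_increasing[OF assms(3)]) (use t in \<open>simp add: one_le_inverse\<close>)

lemma evalp_bound:
  "\<exists>C K. \<forall>t::real. 0 < \<bar>t\<bar> \<and> \<bar>t\<bar> \<le> 1 \<longrightarrow> norm (evalp ps t) \<le> C * inverse \<bar>t\<bar> ^ K"
proof (induction ps rule: dp.induct)
  case 1 then show ?case by (intro exI[of _ 0]) simp
next
  case (2 c p r ps)
  then obtain C K where CK: "\<And>t::real. 0 < \<bar>t\<bar> \<and> \<bar>t\<bar> \<le> 1 \<Longrightarrow> norm (evalp ps t) \<le> C * inverse \<bar>t\<bar> ^ K"
    by blast
  define K' where "K' = max K (Suc p)"
  define C' where "C' = norm c * real r ^ r + C"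
  have "norm (evalp ((c,p,r)#ps) t) \<le> C' * inverse \<bar>t\<bar> ^ K'" if t: "0 < \<bar>t\<bar>" "\<bar>t\<bar> \<le> 1" for t :: real
  proof -
    have "0 \<le> C * inverse \<bar>t\<bar> ^ K" using CK[of t] t order_trans[OF norm_ge_zero] by blast
    moreover have "0 < inverse \<bar>t\<bar> ^ K" using t by simp
    ultimately have C0: "0 \<le> C" by (simp add: zero_le_mult_iff)
    have "norm (c * complex_of_real (inverse t ^ p * ln \<bar>t\<bar> ^ r)) = norm c * (inverse \<bar>t\<bar> ^ p * \<bar>ln \<bar>t\<bar>\<bar> ^ r)"
      by (simp only: norm_mult norm_of_real abs_mult power_abs abs_inverse)
    also have "\<dots> \<le> norm c * (inverse \<bar>t\<bar> ^ p * (real r ^ r * inverse \<bar>t\<bar>))"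
      by (intro mult_left_mono logpow_bound'[OF t]) simp_all
    also have "\<dots> = norm c * real r ^ r * inverse \<bar>t\<bar> ^ Suc p" by (simp add: algebra_simps)
    also have "\<dots> \<le> norm c * real r ^ r * inverse \<bar>t\<bar> ^ K'"
      by (intro mult_left_mono inv_pow_mono[OF t]) (simp_all add: K'_def)
    finally have 1: "norm (c * complex_of_real (inverse t ^ p * ln \<bar>t\<bar> ^ r)) \<le> norm c * real r ^ r * inverse \<bar>t\<bar> ^ K'" .
    have 2: "norm (evalp ps t) \<le> C * inverse \<bar>t\<bar> ^ K'"
      using CK[of t] t mult_left_mono[OF inv_pow_mono[OF t, of K K'] C0] by (simp add: K'_def)
    have "norm (evalp ((c,p,r)#ps) t) \<le> norm (c * complex_of_real (inverse t ^ p * ln \<bar>t\<bar> ^ r)) + norm (evalp ps t)"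
      by (simp add: norm_triangle_ineq)
    also have "\<dots> \<le> C' * inverse \<bar>t\<bar> ^ K'" using 1 2 by (simp add: C'_def algebra_simps)
    finally show ?thesis .
  qed
  then show ?case by blast
qed

lemma evalp_bound_tn:
  assumes "\<forall>(c,p,r)\<in>set ps. c \<noteq> 0 \<longrightarrow> p < n \<or> (p = n \<and> r = 0)"
  shows "\<exists>C. \<forall>t::real. 0 < \<bar>t\<bar> \<and> \<bar>t\<bar> \<le> 1 \<longrightarrow> \<bar>t\<bar>^n * norm (evalp ps t) \<le> C"
  using assms
proof (induction ps rule: dp.induct)
  case 1 then show ?case by (intro exI[of _ 0]) simp
next
  case (2 c p r ps)
  then obtain C where C: "\<And>t::real. 0 < \<bar>t\<bar> \<and> \<bar>t\<bar> \<le> 1 \<Longrightarrow> \<bar>t\<bar>^n * norm (evalp ps t) \<le> C"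
    by auto
  have hc: "c \<noteq> 0 \<Longrightarrow> p < n \<or> (p = n \<and> r = 0)" using "2.prems" by auto
  have "\<bar>t\<bar>^n * norm (evalp ((c,p,r)#ps) t) \<le> norm c * (real r ^ r + 1) + C" if t: "0 < \<bar>t\<bar>" "\<bar>t\<bar> \<le> 1" for t :: real
  proof -
    have T: "\<bar>t\<bar>^n * norm (c * complex_of_real (inverse t ^ p * ln \<bar>t\<bar> ^ r)) \<le> norm c * (real r ^ r + 1)"
    proof (cases "c = 0")
      case True then show ?thesis by simp
    next
      case False
      have eq: "\<bar>t\<bar>^n * norm (c * complex_of_real (inverse t ^ p * ln \<bar>t\<bar> ^ r)) =
          norm c * (\<bar>t\<bar>^n * inverse \<bar>t\<bar> ^ p * \<bar>ln \<bar>t\<bar>\<bar> ^ r)"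
        by (simp only: norm_mult norm_of_real abs_mult power_abs abs_inverse mult_ac)
      have "\<bar>t\<bar>^n * inverse \<bar>t\<bar> ^ p * \<bar>ln \<bar>t\<bar>\<bar> ^ r \<le> real r ^ r + 1"
        using hc[OF False]
      proof
        assume pn: "p < n"
        have "\<bar>t\<bar>^n * inverse \<bar>t\<bar> ^ p = \<bar>t\<bar>^(n - p)"
          using pn t by (simp add: power_diff field_simps)
        also have "\<dots> \<le> \<bar>t\<bar>" using pn t by (metis One_nat_def Suc_leI zero_less_diff power_decreasing power_one_right abs_ge_zero)
        finally have "\<bar>t\<bar>^n * inverse \<bar>t\<bar> ^ p * \<bar>ln \<bar>t\<bar>\<bar> ^ r \<le> \<bar>t\<bar> * \<bar>ln \<bar>t\<bar>\<bar> ^ r"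
          by (rule mult_right_mono) simp
        also have "\<dots> \<le> real r ^ r" by (rule logpow_bound[OF t])
        finally show ?thesis by simp
      next
        assume "p = n \<and> r = 0"
        then show ?thesis using t by (simp add: power_inverse)
      qed
      then show ?thesis unfolding eq by (intro mult_left_mono) simp_all
    qed
    have "\<bar>t\<bar>^n * norm (evalp ((c,p,r)#ps) t) \<le> \<bar>t\<bar>^n * norm (c * complex_of_real (inverse t ^ p * ln \<bar>t\<bar> ^ r)) + \<bar>t\<bar>^n * norm (evalp ps t)"
      by (simp add: distrib_left[symmetric] mult_left_mono norm_triangle_ineq)
    also have "\<dots> \<le> norm c * (real r ^ r + 1) + C" using T C[of t] t by simp
    finally show ?thesis .
  qed
  then show ?case by blast
qed

definition pinv :: "nat \<Rightarrow> (complex \<times> nat \<times> nat) list \<Rightarrow> bool" where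
  "pinv m ps \<longleftrightarrow> (\<forall>(c,p,r)\<in>set ps. c \<noteq> 0 \<longrightarrow> p \<le> m - 1 \<and> (p = m - 1 \<longrightarrow> r \<le> (if m = 1 then 1 else 0)))"

lemma set_dp: "x \<in> set (dp ps) \<Longrightarrow> \<exists>c p r. (c,p,r) \<in> set ps \<and> (x = (c * of_nat r, Suc p, r - 1) \<or> x = (- c * of_nat p, Suc p, r))"
  by (induction ps rule: dp.induct) auto

lemma set_mth: "x \<in> set (mth a b ps) \<Longrightarrow> \<exists>c p r. (c,p,r) \<in> set ps \<and> (x = (\<i> * of_real (a + b) * c, p, r) \<or> x = (\<i> * of_real b * c, p, Suc r))"
  by (induction ps rule: dp.induct) auto

lemma pinv_PP: "1 \<le> m \<Longrightarrow> pinv m (PP a b m)"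
proof (induction m rule: dec_induct)
  case base
  then show ?case by (simp add: pinv_def)
next
  case (step m)
  show ?case unfolding pinv_def
  proof (intro ballI, clarify)
    fix c p r assume mem: "(c, p, r) \<in> set (PP a b (Suc m))" and c: "c \<noteq> 0"
    from mem consider "(c,p,r) \<in> set (dp (PP a b m))" | "(c,p,r) \<in> set (mth a b (PP a b m))" by auto
    then show "p \<le> Suc m - 1 \<and> (p = Suc m - 1 \<longrightarrow> r \<le> (if Suc m = 1 then 1 else 0))"
    proof cases
      case 1
      then obtain c' p' r' where m': "(c',p',r') \<in> set (PP a b m)" and
        e: "(c,p,r) = (c' * of_nat r', Suc p', r' - 1) \<or> (c,p,r) = (- c' * of_nat p', Suc p', r')"
        using set_dp by blast
      from e show ?thesis
      proof
        assume e1: "(c,p,r) = (c' * of_nat r', Suc p', r' - 1)"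
        then have "c' \<noteq> 0" "r' \<noteq> 0" using c by auto
        then have i: "p' \<le> m - 1 \<and> (p' = m - 1 \<longrightarrow> r' \<le> (if m = 1 then 1 else 0))"
          using step.IH m' unfolding pinv_def by fastforce
        then show ?thesis using e1 step.hyps \<open>r' \<noteq> 0\<close> by (cases "m = 1") auto
      next
        assume e1: "(c,p,r) = (- c' * of_nat p', Suc p', r')"
        then have "c' \<noteq> 0" "p' \<noteq> 0" using c by auto
        then have i: "p' \<le> m - 1 \<and> (p' = m - 1 \<longrightarrow> r' \<le> (if m = 1 then 1 else 0))"
          using step.IH m' unfolding pinv_def by fastforce
        then show ?thesis using e1 step.hyps \<open>p' \<noteq> 0\<close> by (cases "m = 1") auto
      qed
    next
      case 2
      then obtain c' p' r' where m': "(c',p',r') \<in> set (PP a b m)" and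
        e: "(c,p,r) = (\<i> * of_real (a + b) * c', p', r') \<or> (c,p,r) = (\<i> * of_real b * c', p', Suc r')"
        using set_mth by blast
      then have "c' \<noteq> 0" using c by auto
      then have i: "p' \<le> m - 1" using step.IH m' unfolding pinv_def by fastforce
      then show ?thesis using e step.hyps by auto
    qed
  qed
qed

lemma PP_bound2:
  assumes "2 \<le> m"
  shows "\<exists>C. \<forall>t::real. 0 < \<bar>t\<bar> \<and> \<bar>t\<bar> \<le> 1 \<longrightarrow> \<bar>t\<bar>^(m - 1) * norm (evalp (PP a b m) t) \<le> C"
proof (rule evalp_bound_tn)
  have "pinv m (PP a b m)" using assms by (intro pinv_PP) simp
  then show "\<forall>(c,p,r)\<in>set (PP a b m). c \<noteq> 0 \<longrightarrow> p < m - 1 \<or> (p = m - 1 \<and> r = 0)"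
    using assms unfolding pinv_def by fastforce
qed

lemma evalp_PP1: "evalp (PP a b 1) t = \<i> * of_real (a + b + b * ln \<bar>t\<bar>)"
  by (simp add: evalp_mth algebra_simps)




lemma inv_log_tendsto:
  assumes S: "side S \<delta>"
  shows "((\<lambda>t. inverse \<bar>1 + ln \<bar>t\<bar>\<bar>) \<longlongrightarrow> 0) (at 0 within S)"
  unfolding tendsto_iff
proof (intro allI impI)
  fix e :: real assume e: "e > 0"
  define d where "d = exp (- inverse e - 1)"
  have d: "d > 0" unfolding d_def by simp
  show "eventually (\<lambda>t. dist (inverse \<bar>1 + ln \<bar>t\<bar>\<bar>) 0 < e) (at 0 within S)"
    unfolding eventually_at
  proof (intro exI[of _ d] conjI d ballI impI)
    fix t assume t: "t \<in> S" "t \<noteq> 0 \<and> dist t 0 < d"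
    then have "ln \<bar>t\<bar> < ln d" by (simp add: d)
    then have "ln \<bar>t\<bar> < - inverse e - 1" unfolding d_def by simp
    then have *: "inverse e < \<bar>1 + ln \<bar>t\<bar>\<bar>" by simp
    have "inverse \<bar>1 + ln \<bar>t\<bar>\<bar> < inverse (inverse e)"
      by (rule less_imp_inverse_less[OF *]) (use e in simp)
    then show "dist (inverse \<bar>1 + ln \<bar>t\<bar>\<bar>) 0 < e" using e by simp
  qed
qed

lemma sum_split_top2:
  fixes h :: "nat \<Rightarrow> 'a::comm_monoid_add"
  shows "(\<Sum>i = 0..Suc n. h i) = (\<Sum>i<n. h i) + h n + h (Suc n)"
proof -
  have "{0..Suc n} = {..<Suc (Suc n)}" by auto
  then show ?thesis by (simp add: add.assoc)
qed

lemma core_flat: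
  fixes f g :: "real \<Rightarrow> complex"
  assumes J: "open J" "0 \<in> J" and S: "side S \<delta>" "S \<subseteq> J"
   and hf: "HD J f" and hg: "HD J g"
   and rel: "\<And>t. t \<in> S \<Longrightarrow> g t = f t * EE 0 lam t"
   and lam: "lam \<noteq> 0"
  shows "(nth_vderiv n f \<longlongrightarrow> 0) (at 0 within S)"
proof (induction n rule: less_induct)
  case (less n)
  obtain M1 d1 where d1: "d1 > 0" "\<And>t. \<bar>t - 0\<bar> < d1 \<Longrightarrow> norm (nth_vderiv n f t) \<le> M1"
    using isCont_bounded_near[OF HD_isCont[OF hf J(2)]] by blast
  obtain M2 d2 where d2: "d2 > 0" "\<And>t. \<bar>t - 0\<bar> < d2 \<Longrightarrow> norm (nth_vderiv (Suc n) f t) \<le> M2"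
    using isCont_bounded_near[OF HD_isCont[OF hf J(2)]] by blast
  obtain M3 d3 where d3: "d3 > 0" "\<And>t. \<bar>t - 0\<bar> < d3 \<Longrightarrow> norm (nth_vderiv (Suc n) g t) \<le> M3"
    using isCont_bounded_near[OF HD_isCont[OF hg J(2)]] by blast
  have "\<forall>m. \<exists>C. 2 \<le> m \<longrightarrow> (\<forall>t::real. 0 < \<bar>t\<bar> \<and> \<bar>t\<bar> \<le> 1 \<longrightarrow> \<bar>t\<bar>^(m - 1) * norm (evalp (PP 0 lam m) t) \<le> C)"
    using PP_bound2 by blast
  then obtain Cf where Cf: "\<And>m t. 2 \<le> m \<Longrightarrow> 0 < \<bar>t\<bar> \<Longrightarrow> \<bar>t\<bar> \<le> 1 \<Longrightarrow> \<bar>t\<bar>^(m - 1) * norm (evalp (PP 0 lam m) t) \<le> Cf m"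
    by metis
  define d where "d = min (min d1 d2) (min d3 1)"
  have d: "d > 0" using d1 d2 d3 by (simp add: d_def)
  define S' where "S' = S \<inter> {-d<..<d}"
  have S': "side S' (min \<delta> d)" unfolding S'_def by (rule side_restrict[OF S(1) d])
  have S'S: "S' \<subseteq> S" unfolding S'_def by auto
  have S'J: "S' \<subseteq> J" using S'S S(2) by auto
  have oS': "open S'" by (rule side_open[OF S'])
  have nz: "0 \<notin> S'" using side_nz[OF S'] by blast
  have tS': "t \<noteq> 0 \<and> \<bar>t\<bar> < d" if "t \<in> S'" for t using that side_nz[OF S(1)] unfolding S'_def by auto
  have low: "norm (nth_vderiv k f t) \<le> M1 * \<bar>t\<bar>^(n - k)" if "k \<le> n" "t \<in> S'" for k t
  proof (rule mvt_iter[OF S', of "\<lambda>k. nth_vderiv k f" n M1 k t])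
    show "(nth_vderiv j f has_vector_derivative nth_vderiv (Suc j) f u) (at u)" if "u \<in> S'" for j u
      using HD_has_vd[OF hf] that S'J by blast
    show "(nth_vderiv j f \<longlongrightarrow> 0) (at 0 within S')" if "j < n" for j
      using less.IH[OF that] S'S by (rule tendsto_within_subset)
    show "norm (nth_vderiv n f u) \<le> M1" if "u \<in> S'" for u
      using d1(2)[of u] tS'[OF that] by (simp add: d_def)
  qed (use that in auto)
  define V where "V = EE 0 lam"
  have hV: "HD S' V" unfolding V_def by (rule HD_EE[OF oS' nz])
  have hf': "HD S' f" by (rule HD_subset[OF hf S'J])
  define R where "R = M3 + M2 + (\<Sum>i<n. of_nat (Suc n choose i) * M1 * Cf (Suc n - i))"
  have key: "norm (nth_vderiv n f t) * (real (Suc n) * \<bar>lam\<bar> * \<bar>1 + ln \<bar>t\<bar>\<bar>) \<le> R" if t: "t \<in> S'" for t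
  proof -
    have t0: "0 < \<bar>t\<bar>" "\<bar>t\<bar> \<le> 1" "\<bar>t\<bar> < d1" "\<bar>t\<bar> < d2" "\<bar>t\<bar> < d3"
      using tS'[OF t] by (auto simp: d_def)
    have gS: "g u = f u * V u" if "u \<in> S'" for u using rel[of u] that S'S unfolding V_def by auto
    have "nth_vderiv (Suc n) g t = nth_vderiv (Suc n) (\<lambda>u. f u * V u) t"
      by (rule nth_vderiv_cong_open[OF oS' gS t])
    also have "\<dots> = (\<Sum>i = 0..Suc n. of_nat (Suc n choose i) * nth_vderiv i f t * nth_vderiv (Suc n - i) V t)"
      by (rule leibniz[OF oS' hf' hV t])
    also have "\<dots> = (\<Sum>i<n. of_nat (Suc n choose i) * nth_vderiv i f t * nth_vderiv (Suc n - i) V t)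
         + of_nat (Suc n) * nth_vderiv n f t * nth_vderiv 1 V t + nth_vderiv (Suc n) f t * V t"
      by (simp only: sum_split_top2) simp
    finally have eq: "of_nat (Suc n) * nth_vderiv n f t * nth_vderiv 1 V t =
       nth_vderiv (Suc n) g t - nth_vderiv (Suc n) f t * V t -
       (\<Sum>i<n. of_nat (Suc n choose i) * nth_vderiv i f t * nth_vderiv (Suc n - i) V t)"
      by (simp add: algebra_simps)
    have V1: "nth_vderiv 1 V t = \<i> * of_real (lam + lam * ln \<bar>t\<bar>) * V t"
      unfolding V_def using EE_nth[OF oS' nz t, of 1 0 lam] by (simp add: evalp_PP1 algebra_simps)
    have nV: "norm (V t) = 1" unfolding V_def by simp
    have A: "norm (of_nat (Suc n) * nth_vderiv n f t * nth_vderiv 1 V t) =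
        norm (nth_vderiv n f t) * (real (Suc n) * \<bar>lam\<bar> * \<bar>1 + ln \<bar>t\<bar>\<bar>)"
    proof -
      have "lam + lam * ln \<bar>t\<bar> = lam * (1 + ln \<bar>t\<bar>)" by (simp add: algebra_simps)
      moreover have "cmod (1 + complex_of_nat n) = 1 + real n" by (metis norm_of_nat of_nat_Suc)
      ultimately show ?thesis unfolding V1 using nV
        by (simp add: norm_mult abs_mult norm_of_real del: of_real_add of_real_mult)
    qed
    have "norm (nth_vderiv n f t) * (real (Suc n) * \<bar>lam\<bar> * \<bar>1 + ln \<bar>t\<bar>\<bar>) = norm (of_nat (Suc n) * nth_vderiv n f t * nth_vderiv 1 V t)"
      by (rule A[symmetric])
    also have "\<dots> = norm (nth_vderiv (Suc n) g t - nth_vderiv (Suc n) f t * V t -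
       (\<Sum>i<n. of_nat (Suc n choose i) * nth_vderiv i f t * nth_vderiv (Suc n - i) V t))"
      by (simp only: eq)
    also have "\<dots> \<le> norm (nth_vderiv (Suc n) g t) + norm (nth_vderiv (Suc n) f t * V t) +
       norm (\<Sum>i<n. of_nat (Suc n choose i) * nth_vderiv i f t * nth_vderiv (Suc n - i) V t)"
      by (rule order_trans[OF norm_triangle_ineq4 add_mono[OF norm_triangle_ineq4 order_refl]])
    also have "\<dots> \<le> M3 + M2 + (\<Sum>i<n. of_nat (Suc n choose i) * M1 * Cf (Suc n - i))"
    proof (intro add_mono)
      show "norm (nth_vderiv (Suc n) g t) \<le> M3" using d3(2) t0 by simp
      show "norm (nth_vderiv (Suc n) f t * V t) \<le> M2" using d2(2) t0 nV by (simp add: norm_mult)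
      have "norm (\<Sum>i<n. of_nat (Suc n choose i) * nth_vderiv i f t * nth_vderiv (Suc n - i) V t)
          \<le> (\<Sum>i<n. norm (of_nat (Suc n choose i) * nth_vderiv i f t * nth_vderiv (Suc n - i) V t))"
        by (rule norm_sum)
      also have "\<dots> \<le> (\<Sum>i<n. of_nat (Suc n choose i) * M1 * Cf (Suc n - i))"
      proof (rule sum_mono)
        fix i assume i: "i \<in> {..<n}"
        have m2: "2 \<le> Suc n - i" using i by auto
        have eqm: "Suc n - i - 1 = n - i" using i by auto
        have "norm (of_nat (Suc n choose i) * nth_vderiv i f t * nth_vderiv (Suc n - i) V t)
            = of_nat (Suc n choose i) * (norm (nth_vderiv i f t) * norm (evalp (PP 0 lam (Suc n - i)) t))"
          unfolding V_def using EE_nth[OF oS' nz t] by (simp add: norm_mult)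
        also have "\<dots> \<le> of_nat (Suc n choose i) * ((M1 * \<bar>t\<bar>^(n - i)) * norm (evalp (PP 0 lam (Suc n - i)) t))"
          using low[of i t] i t by (intro mult_left_mono mult_right_mono) auto
        also have "\<dots> = of_nat (Suc n choose i) * M1 * (\<bar>t\<bar>^(Suc n - i - 1) * norm (evalp (PP 0 lam (Suc n - i)) t))"
          by (simp add: eqm)
        also have "\<dots> \<le> of_nat (Suc n choose i) * M1 * Cf (Suc n - i)"
        proof (rule mult_left_mono)
          show "\<bar>t\<bar>^(Suc n - i - 1) * norm (evalp (PP 0 lam (Suc n - i)) t) \<le> Cf (Suc n - i)"
            by (rule Cf[OF m2 t0(1,2)])
          have "0 \<le> norm (nth_vderiv n f t)" by simp
          also have "\<dots> \<le> M1" using d1(2) t0 by simp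
          finally show "0 \<le> of_nat (Suc n choose i) * M1" by simp
        qed
        finally show "norm (of_nat (Suc n choose i) * nth_vderiv i f t * nth_vderiv (Suc n - i) V t)
            \<le> of_nat (Suc n choose i) * M1 * Cf (Suc n - i)" .
      qed
      finally show "norm (\<Sum>i<n. of_nat (Suc n choose i) * nth_vderiv i f t * nth_vderiv (Suc n - i) V t)
          \<le> (\<Sum>i<n. of_nat (Suc n choose i) * M1 * Cf (Suc n - i))" .
    qed
    finally show ?thesis unfolding R_def .
  qed
  have lim0: "((\<lambda>t. (R / (real (Suc n) * \<bar>lam\<bar>)) * inverse \<bar>1 + ln \<bar>t\<bar>\<bar>) \<longlongrightarrow> 0) (at 0 within S')"
    by (rule tendsto_mult_right_zero[OF inv_log_tendsto[OF S']])
  have "(nth_vderiv n f \<longlongrightarrow> 0) (at 0 within S')"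
  proof (rule Lim_null_comparison[OF _ lim0])
    show "eventually (\<lambda>t. norm (nth_vderiv n f t) \<le> (R / (real (Suc n) * \<bar>lam\<bar>)) * inverse \<bar>1 + ln \<bar>t\<bar>\<bar>) (at 0 within S')"
      unfolding eventually_at
    proof (intro exI[of _ "exp (-1)"] conjI ballI impI)
      show "0 < exp (-1::real)" by simp
      fix t assume t: "t \<in> S'" "t \<noteq> 0 \<and> dist t 0 < exp (- 1)"
      have "ln \<bar>t\<bar> < ln (exp (-1))" using t by (simp del: ln_exp)
      then have pos: "0 < \<bar>1 + ln \<bar>t\<bar>\<bar>" by simp
      have pos2: "0 < real (Suc n) * \<bar>lam\<bar> * \<bar>1 + ln \<bar>t\<bar>\<bar>" using pos lam by simp
      have "norm (nth_vderiv n f t) \<le> R / (real (Suc n) * \<bar>lam\<bar> * \<bar>1 + ln \<bar>t\<bar>\<bar>)"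
        using key[OF t(1)] pos2 by (simp add: pos_le_divide_eq)
      then show "norm (nth_vderiv n f t) \<le> (R / (real (Suc n) * \<bar>lam\<bar>)) * inverse \<bar>1 + ln \<bar>t\<bar>\<bar>"
        by (simp add: field_simps)
    qed
  qed
  then show ?case
  proof -
    assume L: "(nth_vderiv n f \<longlongrightarrow> 0) (at 0 within S')"
    have "at 0 within S' = at 0 within S"
    proof -
      have "at 0 within S' = at 0 within (S \<inter> {-d<..<d})" unfolding S'_def ..
      also have "\<dots> = at 0 within S"
        by (rule at_within_nhd[of _ "{-d<..<d}"]) (use d in auto)
      finally show ?thesis .
    qed
    then show ?thesis using L by simp
  qed
qed




lemma flat_transfer:
  fixes C a :: "real \<Rightarrow> complex"
  assumes S: "side S \<delta>" and hC: "HD S C"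
   and limC: "\<And>k. (nth_vderiv k C \<longlongrightarrow> 0) (at 0 within S)"
   and rel: "\<And>t. t \<in> S \<Longrightarrow> a t = C t * EE 0 mu t"
  shows "(nth_vderiv n a \<longlongrightarrow> 0) (at 0 within S)"
proof -
  have oS: "open S" by (rule side_open[OF S])
  have nz: "0 \<notin> S" using side_nz[OF S] by blast
  have hW: "HD S (EE 0 mu)" by (rule HD_EE[OF oS nz])
  have "\<forall>m. \<exists>K L. \<forall>t::real. 0 < \<bar>t\<bar> \<and> \<bar>t\<bar> \<le> 1 \<longrightarrow> norm (evalp (PP 0 mu m) t) \<le> K * inverse \<bar>t\<bar> ^ L"
    using evalp_bound by blast
  then obtain Kf Lf where KL: "\<And>m t. 0 < \<bar>t\<bar> \<Longrightarrow> \<bar>t\<bar> \<le> 1 \<Longrightarrow> norm (evalp (PP 0 mu m) t) \<le> Kf m * inverse \<bar>t\<bar> ^ Lf m"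
    by metis
  define B where "B = (\<Sum>i = 0..n. of_nat (n choose i) * Kf (n - i))"
  have ev: "eventually (\<lambda>t. \<forall>i\<in>{0..n}. norm (of_nat (n choose i) * nth_vderiv i C t * nth_vderiv (n - i) (EE 0 mu) t)
              \<le> of_nat (n choose i) * Kf (n - i) * \<bar>t\<bar>) (at 0 within S)"
  proof (rule eventually_ball_finite[OF finite_atLeastAtMost], rule ballI)
    fix i assume i: "i \<in> {0..n}"
    obtain d where d: "d > 0" "\<And>t. t \<in> S \<Longrightarrow> \<bar>t\<bar> < d \<Longrightarrow> norm (nth_vderiv i C t) \<le> \<bar>t\<bar>^Suc (Lf (n - i))"
      using flat_pow_bound[OF S hC limC, of i "Suc (Lf (n - i))"] by blast
    show "eventually (\<lambda>t. norm (of_nat (n choose i) * nth_vderiv i C t * nth_vderiv (n - i) (EE 0 mu) t)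
              \<le> of_nat (n choose i) * Kf (n - i) * \<bar>t\<bar>) (at 0 within S)"
      unfolding eventually_at
    proof (intro exI[of _ "min d 1"] conjI ballI impI)
      show "0 < min d 1" using d by simp
      fix t assume t: "t \<in> S" "t \<noteq> 0 \<and> dist t 0 < min d 1"
      have t0: "0 < \<bar>t\<bar>" "\<bar>t\<bar> \<le> 1" "\<bar>t\<bar> < d" using t by auto
      have "norm (nth_vderiv i C t) * norm (evalp (PP 0 mu (n - i)) t) \<le> \<bar>t\<bar>^Suc (Lf (n - i)) * (Kf (n - i) * inverse \<bar>t\<bar> ^ Lf (n - i))"
        by (rule mult_mono[OF d(2)[OF t(1) t0(3)] KL[OF t0(1,2)]]) simp_all
      also have "\<dots> = Kf (n - i) * \<bar>t\<bar>" using t0 by (simp add: power_inverse field_simps)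
      finally have *: "norm (nth_vderiv i C t) * norm (evalp (PP 0 mu (n - i)) t) \<le> Kf (n - i) * \<bar>t\<bar>" .
      have "norm (of_nat (n choose i) * nth_vderiv i C t * nth_vderiv (n - i) (EE 0 mu) t) =
          of_nat (n choose i) * (norm (nth_vderiv i C t) * norm (evalp (PP 0 mu (n - i)) t))"
        using EE_nth[OF oS nz t(1)] by (simp add: norm_mult)
      also have "\<dots> \<le> of_nat (n choose i) * (Kf (n - i) * \<bar>t\<bar>)" by (rule mult_left_mono[OF *]) simp
      finally show "norm (of_nat (n choose i) * nth_vderiv i C t * nth_vderiv (n - i) (EE 0 mu) t)
              \<le> of_nat (n choose i) * Kf (n - i) * \<bar>t\<bar>" by (simp add: mult.assoc)
    qed
  qed
  have ev2: "eventually (\<lambda>t. norm (nth_vderiv n a t) \<le> B * \<bar>t\<bar>) (at 0 within S)"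
  proof (rule eventually_mono[OF eventually_conj[OF ev eventually_at_topological[THEN iffD2]]])
    show "\<exists>T. open T \<and> 0 \<in> T \<and> (\<forall>t\<in>T. t \<noteq> 0 \<longrightarrow> t \<in> S \<longrightarrow> t \<in> S)" by (intro exI[of _ UNIV]) simp
    fix t assume t: "(\<forall>i\<in>{0..n}. norm (of_nat (n choose i) * nth_vderiv i C t * nth_vderiv (n - i) (EE 0 mu) t)
              \<le> of_nat (n choose i) * Kf (n - i) * \<bar>t\<bar>) \<and> t \<in> S"
    have "nth_vderiv n a t = nth_vderiv n (\<lambda>t. C t * EE 0 mu t) t"
      by (rule nth_vderiv_cong_open[OF oS rel]) (use t in simp_all)
    also have "\<dots> = (\<Sum>i = 0..n. of_nat (n choose i) * nth_vderiv i C t * nth_vderiv (n - i) (EE 0 mu) t)"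
      using leibniz[OF oS hC hW] t by blast
    finally have "norm (nth_vderiv n a t) \<le> (\<Sum>i = 0..n. norm (of_nat (n choose i) * nth_vderiv i C t * nth_vderiv (n - i) (EE 0 mu) t))"
      by (simp add: norm_sum)
    also have "\<dots> \<le> (\<Sum>i = 0..n. of_nat (n choose i) * Kf (n - i) * \<bar>t\<bar>)"
      by (rule sum_mono) (use t in blast)
    also have "\<dots> = B * \<bar>t\<bar>" unfolding B_def by (simp add: sum_distrib_right)
    finally show "norm (nth_vderiv n a t) \<le> B * \<bar>t\<bar>" .
  qed
  have "((\<lambda>t. B * \<bar>t\<bar>) \<longlongrightarrow> B * \<bar>0\<bar>) (at 0 within S)"
    by (intro tendsto_intros)
  then have "((\<lambda>t. B * \<bar>t\<bar>) \<longlongrightarrow> 0) (at 0 within S)" by simp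
  then show ?thesis by (rule Lim_null_comparison[OF ev2])
qed




fun dirs :: "(real \<times> real \<Rightarrow> complex) \<Rightarrow> real \<times> real \<Rightarrow> nat \<Rightarrow> real \<times> real \<Rightarrow> complex" where
  "dirs \<sigma> w 0 = \<sigma>"
| "dirs \<sigma> w (Suc n) = (\<lambda>z. frechet_derivative (dirs \<sigma> w n) (at z) w)"

lemma smooth_dirs: "smooth_on Z \<sigma> \<Longrightarrow> smooth_on Z (dirs \<sigma> w n)"
  by (induction n) (auto intro: smooth_on_frechet)

lemma chain_affine:
  fixes g :: "real \<times> real \<Rightarrow> complex"
  assumes "g differentiable (at (z0 + t *\<^sub>R w))"
  shows "((\<lambda>t. g (z0 + t *\<^sub>R w)) has_vector_derivative frechet_derivative g (at (z0 + t *\<^sub>R w)) w) (at t)"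
proof -
  let ?D = "frechet_derivative g (at (z0 + t *\<^sub>R w))"
  have g: "(g has_derivative ?D) (at (z0 + t *\<^sub>R w))" using assms frechet_derivative_works by blast
  have lin: "linear ?D" using has_derivative_linear[OF g] .
  have "((\<lambda>t. z0 + t *\<^sub>R w) has_derivative (\<lambda>h. h *\<^sub>R w)) (at t)"
    by (auto intro!: derivative_eq_intros)
  from has_derivative_compose[OF this g]
  have "((\<lambda>t. g (z0 + t *\<^sub>R w)) has_derivative (\<lambda>h. ?D (h *\<^sub>R w))) (at t)" .
  moreover have "(\<lambda>h. ?D (h *\<^sub>R w)) = (\<lambda>h. h *\<^sub>R ?D w)" using linear_scale[OF lin] by auto
  ultimately show ?thesis unfolding has_vector_derivative_def by simp
qed

lemma HD_comp_affine:
  fixes \<sigma> :: "real \<times> real \<Rightarrow> complex"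
  assumes sm: "smooth_on Z \<sigma>" and I: "open I" and mem: "\<And>t. t \<in> I \<Longrightarrow> z0 + t *\<^sub>R w \<in> Z"
  shows "HD I (\<lambda>t. \<sigma> (z0 + t *\<^sub>R w))"
proof -
  have eq: "t \<in> I \<Longrightarrow> nth_vderiv n (\<lambda>t. \<sigma> (z0 + t *\<^sub>R w)) t = dirs \<sigma> w n (z0 + t *\<^sub>R w)" for n t
  proof (induction n arbitrary: t)
    case 0 then show ?case by simp
  next
    case (Suc n t)
    have "((\<lambda>t. dirs \<sigma> w n (z0 + t *\<^sub>R w)) has_vector_derivative dirs \<sigma> w (Suc n) (z0 + t *\<^sub>R w)) (at t)"
      using chain_affine[OF smooth_on_differentiable[OF smooth_dirs[OF sm] mem[OF Suc.prems]]] by simp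
    then have "(nth_vderiv n (\<lambda>t. \<sigma> (z0 + t *\<^sub>R w)) has_vector_derivative dirs \<sigma> w (Suc n) (z0 + t *\<^sub>R w)) (at t)"
      unfolding has_vector_derivative_def
      by (rule has_derivative_transform_within_open[OF _ I Suc.prems]) (simp add: Suc.IH)
    then show ?case by (simp add: nth_vderiv_Suc vector_derivative_at)
  qed
  show ?thesis unfolding HD_def
  proof (intro allI ballI)
    fix n t assume t: "t \<in> I"
    have "((\<lambda>t. dirs \<sigma> w n (z0 + t *\<^sub>R w)) has_vector_derivative dirs \<sigma> w (Suc n) (z0 + t *\<^sub>R w)) (at t)"
      using chain_affine[OF smooth_on_differentiable[OF smooth_dirs[OF sm] mem[OF t]]] by simp
    then have "(nth_vderiv n (\<lambda>t. \<sigma> (z0 + t *\<^sub>R w)) has_vector_derivative dirs \<sigma> w (Suc n) (z0 + t *\<^sub>R w)) (at t)"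
      unfolding has_vector_derivative_def
      by (rule has_derivative_transform_within_open[OF _ I t]) (simp add: eq)
    then show "nth_vderiv n (\<lambda>t. \<sigma> (z0 + t *\<^sub>R w)) differentiable (at t)"
      unfolding has_vector_derivative_def differentiable_def by blast
  qed
qed

definition hf :: "(real \<times> real \<Rightarrow> complex) \<Rightarrow> real \<Rightarrow> real \<Rightarrow> complex" where
  "hf \<sigma> t u = \<sigma> (u, t / u) * exp (\<i> * of_real (t * ln \<bar>u\<bar> - t / 2 * ln \<bar>t\<bar>))"

lemma hf_vd:
  assumes sm: "smooth_on Z \<sigma>" and lf: "leafwise_flat Z \<sigma>" and u: "u \<noteq> 0" and mem: "(u, t / u) \<in> Z"
  shows "(hf \<sigma> t has_vector_derivative 0) (at u)"
proof -
  let ?z = "(u, t / u)"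
  let ?D = "frechet_derivative \<sigma> (at ?z)"
  have g: "(\<sigma> has_derivative ?D) (at ?z)" by (rule smooth_on_has_derivative[OF sm mem])
  have lin: "linear ?D" using has_derivative_linear[OF g] .
  have "((\<lambda>u. (u, t / u)) has_derivative (\<lambda>h. (h, h * (- t / u^2)))) (at u)"
    using u by (auto intro!: derivative_eq_intros simp: power2_eq_square field_simps)
  from has_derivative_compose[OF this g]
  have d1: "((\<lambda>u. \<sigma> (u, t / u)) has_derivative (\<lambda>h. ?D (h, h * (- t / u^2)))) (at u)" .
  have "(h, h * (- t / u^2)) = (h / u) *\<^sub>R (u, - (t / u))" for h
    using u by (simp add: power2_eq_square field_simps)
  then have "?D (h, h * (- t / u^2)) = (h / u) *\<^sub>R ?D (u, - (t / u))" for h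
    using linear_scale[OF lin] by metis
  moreover have "?D (u, - (t / u)) = - \<i> * of_real t * \<sigma> ?z"
  proof -
    have "nabla \<sigma> ?z (1 *\<^sub>R leaf_field ?z) = 0" using lf mem unfolding leafwise_flat_def by blast
    then have "?D (u, - (t / u)) - \<i> * \<sigma> ?z * complex_of_real ((u * (- (t / u)) - t / u * u) / 2) = 0"
      unfolding nabla_def leaf_field_def Theta_def by simp
    moreover have "(u * (- (t / u)) - t / u * u) / 2 = - t" using u by (simp add: field_simps)
    ultimately have "?D (u, - (t / u)) - \<i> * \<sigma> ?z * complex_of_real (- t) = 0" by simp
    then have "?D (u, - (t / u)) = \<i> * \<sigma> ?z * complex_of_real (- t)"
      by (simp only: right_minus_eq)
    then show ?thesis by simp
  qed
  ultimately have d1': "((\<lambda>u. \<sigma> (u, t / u)) has_vector_derivative (- \<i> * of_real t * \<sigma> ?z / of_real u)) (at u)"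
    using d1 unfolding has_vector_derivative_def
    by (simp add: scaleR_conv_of_real divide_inverse mult_ac)
  have "((\<lambda>u. t * ln \<bar>u\<bar> - t / 2 * ln \<bar>t\<bar>) has_real_derivative t * inverse u - 0) (at u)"
    by (intro DERIV_diff DERIV_cmult DERIV_lnabs[OF u] DERIV_const)
  then have "((\<lambda>u. \<i> * of_real (t * ln \<bar>u\<bar> - t / 2 * ln \<bar>t\<bar>)) has_vector_derivative \<i> * of_real (t * inverse u - 0)) (at u)"
    by (intro has_vector_derivative_mult_right vd_of_real)
  from vd_exp[OF this]
  have d2: "((\<lambda>u. exp (\<i> * of_real (t * ln \<bar>u\<bar> - t / 2 * ln \<bar>t\<bar>))) has_vector_derivative
     exp (\<i> * of_real (t * ln \<bar>u\<bar> - t / 2 * ln \<bar>t\<bar>)) * (\<i> * of_real (t * inverse u - 0))) (at u)" .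
  from has_vector_derivative_mult[OF d1' d2]
  show ?thesis unfolding hf_def using u
    by (simp add: field_simps)
qed

lemma hf_const:
  assumes sm: "smooth_on (Zset \<epsilon> \<eta>) \<sigma>" and lf: "leafwise_flat (Zset \<epsilon> \<eta>) \<sigma>"
    and m1: "(x, y) \<in> Zset \<epsilon> \<eta>" and m2: "(x', y') \<in> Zset \<epsilon> \<eta>"
    and t: "x * y = x' * y'" "x * y \<noteq> 0" and s: "x * x' > 0"
  shows "hf \<sigma> (x * y) x = hf \<sigma> (x * y) x'"
proof -
  let ?t = "x * y"
  have xy: "x \<noteq> 0" "y \<noteq> 0" "x' \<noteq> 0" "y' \<noteq> 0" using t by auto
  have segmem: "u \<noteq> 0 \<and> (u, ?t / u) \<in> Zset \<epsilon> \<eta>" if u: "u \<in> closed_segment x x'" for u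
  proof -
    have b: "\<bar>x\<bar> < \<epsilon>" "\<bar>x'\<bar> < \<epsilon>" "\<bar>y\<bar> < \<epsilon>" "\<bar>y'\<bar> < \<epsilon>" "\<bar>?t\<bar> < \<eta>"
      using m1 m2 t unfolding Zset_def by auto
    have "\<bar>?t\<bar> = \<bar>x\<bar> * \<bar>y\<bar>" by (simp add: abs_mult)
    then have l1: "\<bar>?t\<bar> < \<bar>x\<bar> * \<epsilon>" using b xy by (simp add: mult_strict_left_mono)
    have "\<bar>?t\<bar> = \<bar>x'\<bar> * \<bar>y'\<bar>" using t by (simp add: abs_mult)
    then have l2: "\<bar>?t\<bar> < \<bar>x'\<bar> * \<epsilon>" using b xy by (simp add: mult_strict_left_mono)
    have "(0 < x \<and> 0 < x') \<or> (x < 0 \<and> x' < 0)" using s by (simp add: zero_less_mult_iff)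
    then have ub: "u \<noteq> 0 \<and> \<bar>u\<bar> < \<epsilon> \<and> \<bar>?t\<bar> < \<bar>u\<bar> * \<epsilon>"
    proof
      assume a: "0 < x \<and> 0 < x'"
      have "min x x' \<le> u \<and> u \<le> max x x'" using u by (auto simp: closed_segment_eq_real_ivl split: if_splits)
      moreover have "\<bar>?t\<bar> < min x x' * \<epsilon>" using l1 l2 a by (simp add: min_def)
      moreover have "0 < \<epsilon>" using b by linarith
      ultimately show ?thesis using a b
        by (smt (verit) mult_right_mono)
    next
      assume a: "x < 0 \<and> x' < 0"
      have "min x x' \<le> u \<and> u \<le> max x x'" using u by (auto simp: closed_segment_eq_real_ivl split: if_splits)
      moreover have "\<bar>?t\<bar> < (- max x x') * \<epsilon>" using l1 l2 a by (simp add: max_def)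
      moreover have "0 < \<epsilon>" using b by linarith
      ultimately show ?thesis using a b
        by (smt (verit) mult_right_mono)
    qed
    have "\<bar>?t / u\<bar> < \<epsilon>" using ub by (simp add: abs_divide divide_less_eq mult.commute)
    moreover have "\<bar>u * (?t / u)\<bar> < \<eta>" using ub b by simp
    ultimately show ?thesis using ub unfolding Zset_def by simp
  qed
  have "\<exists>c. \<forall>u\<in>closed_segment x x'. hf \<sigma> ?t u = c"
  proof (rule has_derivative_zero_constant)
    show "convex (closed_segment x x')" by simp
    fix u assume "u \<in> closed_segment x x'"
    with segmem have "(hf \<sigma> ?t has_vector_derivative 0) (at u)"
      using hf_vd[OF sm lf] by blast
    then show "(hf \<sigma> ?t has_derivative (\<lambda>h. 0)) (at u within closed_segment x x')"
      unfolding has_vector_derivative_def by (simp add: has_derivative_at_withinI)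
  qed
  then show ?thesis by auto
qed

lemma sigma_hf:
  assumes "x \<noteq> 0" "y \<noteq> 0"
  shows "\<sigma> (x, y) = hf \<sigma> (x * y) x * model_phase x y"
proof -
  have 1: "ln \<bar>x / y\<bar> = ln \<bar>x\<bar> - ln \<bar>y\<bar>" using assms by (simp add: abs_divide ln_div)
  have 2: "ln \<bar>x * y\<bar> = ln \<bar>x\<bar> + ln \<bar>y\<bar>" using assms by (simp add: abs_mult ln_mult)
  have e: "ln \<bar>x / y\<bar> = 2 * ln \<bar>x\<bar> - ln \<bar>x * y\<bar>" using 1 2 by simp
  have "x * y * ln \<bar>x / y\<bar> = x * y * (2 * ln \<bar>x\<bar> - ln \<bar>x * y\<bar>)" by (subst e) (rule refl)
  also have "\<dots> = 2 * (x * y * ln \<bar>x\<bar> - x * y / 2 * ln \<bar>x * y\<bar>)" by (simp add: algebra_simps)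
  finally have "x * y * ln \<bar>x / y\<bar> = 2 * (x * y * ln \<bar>x\<bar> - x * y / 2 * ln \<bar>x * y\<bar>)" .
  then have "model_phase x y = exp (- (\<i> / 2) * of_real (2 * (x * y * ln \<bar>x\<bar> - x * y / 2 * ln \<bar>x * y\<bar>)))"
    unfolding model_phase_def by (rule arg_cong)
  also have "\<dots> = exp (- (\<i> * of_real (x * y * ln \<bar>x\<bar> - x * y / 2 * ln \<bar>x * y\<bar>)))"
    by (rule arg_cong[where f=exp]) (simp only: of_real_mult of_real_numeral, simp)
  finally have "model_phase x y = exp (- (\<i> * of_real (x * y * ln \<bar>x\<bar> - x * y / 2 * ln \<bar>x * y\<bar>)))" .
  then show ?thesis unfolding hf_def using assms
    by (simp add: exp_minus field_simps)
qed




lemma EE_mult: "EE a b t * EE a' b' t = EE (a + a') (b + b') t"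
  unfolding EE_def by (simp add: exp_add[symmetric] algebra_simps)

lemma EE_split: "EE a b t = exp (of_real t * (\<i> * of_real a)) * EE 0 b t"
  unfolding EE_def by (simp add: exp_add[symmetric] algebra_simps)

lemma EE_zero: "EE 0 0 t = 1"
  unfolding EE_def by simp

lemma part_i_j:
  fixes \<sigma> :: "real \<times> real \<Rightarrow> complex"
  assumes eta: "0 < \<eta>" "\<eta> < \<epsilon>\<^sup>2" and eps: "0 < \<epsilon>"
    and sm: "smooth_on (Zset \<epsilon> \<eta>) \<sigma>" and lf: "leafwise_flat (Zset \<epsilon> \<eta>) \<sigma>"
    and sx: "sx = 1 \<or> sx = -1" and sy: "sy = 1 \<or> sy = -1"
    and I: "side I \<eta>" and Imem: "\<And>t. t \<in> I \<longleftrightarrow> 0 < sx * sy * t \<and> \<bar>t\<bar> < \<eta>"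
    and Q: "\<And>x y. (x, y) \<in> Q \<longleftrightarrow> 0 < sx * x \<and> 0 < sy * y"
  shows "\<exists>b. smooth_on I b \<and> flat_at_0 I b \<and>
     (\<forall>x y. (x, y) \<in> Zset \<epsilon> \<eta> \<inter> Q \<longrightarrow> \<sigma> (x, y) = b (x * y) * model_phase x y)"
proof -
  define c0 where "c0 = (\<eta> / \<epsilon> + \<epsilon>) / 2"
  have ee: "\<eta> / \<epsilon> < \<epsilon>" using eta eps by (simp add: divide_less_eq power2_eq_square)
  have q: "0 < \<eta> / \<epsilon>" using eta eps by simp
  define r where "r = \<eta> / \<epsilon>"
  have rr: "r < \<epsilon>" "0 < r" using ee q unfolding r_def by auto
  have c0r: "c0 = (r + \<epsilon>) / 2" unfolding c0_def r_def ..
  have c01: "0 < c0" using rr eps unfolding c0r by simp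
  have c02: "c0 < \<epsilon>" using rr eps unfolding c0r by simp
  have c03: "\<eta> / \<epsilon> < c0" using rr eps unfolding c0r r_def[symmetric] by simp
  note c0 = c01 c02 c03
  have c0e: "\<eta> < c0 * \<epsilon>" using c0(3) eps by (simp add: divide_less_eq)
  have sx2: "sx * sx = 1" "\<bar>sx\<bar> = 1" using sx by auto
  have sy2: "sy * sy = 1" "\<bar>sy\<bar> = 1" using sy by auto
  define xj where "xj = sx * c0"
  define yj where "yj = sy * c0"
  have xj: "\<bar>xj\<bar> = c0" "xj \<noteq> 0" "0 < sx * xj" using c0 sx unfolding xj_def by (auto simp: abs_mult)
  have yj: "\<bar>yj\<bar> = c0" "yj \<noteq> 0" "0 < sy * yj" using c0 sy unfolding yj_def by (auto simp: abs_mult)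
  define J where "J = {-\<eta><..<\<eta>}"
  have oJ: "open J" "0 \<in> J" using eta unfolding J_def by auto
  have IJ: "I \<subseteq> J" using Imem unfolding J_def by auto
  have oI: "open I" using side_open[OF I] .
  have nzI: "0 \<notin> I" using side_nz[OF I] by blast
  have Bmem: "(xj, t / xj) \<in> Zset \<epsilon> \<eta>" if "t \<in> J" for t
  proof -
    have "\<bar>t / xj\<bar> < \<epsilon>"
    proof -
      have "\<bar>t\<bar> < c0 * \<epsilon>" using that c0e unfolding J_def by auto
      then show ?thesis using xj c0 by (simp add: abs_divide divide_less_eq mult.commute)
    qed
    then show ?thesis using that xj c0 unfolding Zset_def J_def by auto
  qed
  have Cmem: "(t / yj, yj) \<in> Zset \<epsilon> \<eta>" if "t \<in> J" for t
  proof -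
    have "\<bar>t / yj\<bar> < \<epsilon>"
    proof -
      have "\<bar>t\<bar> < c0 * \<epsilon>" using that c0e unfolding J_def by auto
      then show ?thesis using yj c0 by (simp add: abs_divide divide_less_eq mult.commute)
    qed
    moreover have "t / yj * yj = t" using yj by simp
    ultimately show ?thesis using that yj c0 unfolding Zset_def J_def by (auto simp: abs_mult)
  qed
  define B where "B t = \<sigma> (xj, t / xj)" for t
  define C where "C t = \<sigma> (t / yj, yj)" for t
  have hB: "HD J B"
  proof -
    have "HD J (\<lambda>t. \<sigma> ((xj, 0) + t *\<^sub>R (0, 1 / xj)))"
      by (rule HD_comp_affine[OF sm oJ(1)]) (use Bmem in \<open>simp add: divide_inverse\<close>)
    moreover have "(\<lambda>t. \<sigma> ((xj, 0) + t *\<^sub>R (0, 1 / xj))) = B"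
      unfolding B_def by (simp add: fun_eq_iff divide_inverse)
    ultimately show ?thesis by simp
  qed
  have hC: "HD J C"
  proof -
    have "HD J (\<lambda>t. \<sigma> ((0, yj) + t *\<^sub>R (1 / yj, 0)))"
      by (rule HD_comp_affine[OF sm oJ(1)]) (use Cmem in \<open>simp add: divide_inverse\<close>)
    moreover have "(\<lambda>t. \<sigma> ((0, yj) + t *\<^sub>R (1 / yj, 0))) = C"
      unfolding C_def by (simp add: fun_eq_iff divide_inverse)
    ultimately show ?thesis by simp
  qed
  define a where "a t = B t * EE (ln c0) (-1/2) t" for t
  have ha: "HD I a" unfolding a_def
    by (rule HD_mult[OF oI HD_subset[OF hB IJ] HD_EE[OF oI nzI]])
  have tI: "t \<noteq> 0 \<and> t \<in> J" if "t \<in> I" for t using that nzI IJ by auto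
  have hfB: "hf \<sigma> t xj = a t" if t: "t \<in> I" for t
  proof -
    have e: "t * ln \<bar>xj\<bar> - t / 2 * ln \<bar>t\<bar> = ln c0 * t + (-1/2) * (t * ln \<bar>t\<bar>)" using xj by simp
    show ?thesis unfolding hf_def a_def B_def EE_def e by (rule refl)
  qed
  have leaf: "\<sigma> (x, y) = a (x * y) * model_phase x y" if m: "(x, y) \<in> Zset \<epsilon> \<eta>" "(x, y) \<in> Q" for x y
  proof -
    have p: "0 < sx * x" "0 < sy * y" using m(2) Q by auto
    have xy0: "x \<noteq> 0" "y \<noteq> 0" using p by auto
    have "0 < (sx * x) * (sy * y)" by (rule mult_pos_pos[OF p])
    then have "0 < sx * sy * (x * y)" by (simp add: mult_ac)
    moreover have "\<bar>x * y\<bar> < \<eta>" using m(1) unfolding Zset_def by simp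
    ultimately have tI': "x * y \<in> I" using Imem by simp
    have "0 < (sx * x) * (sx * xj)" by (rule mult_pos_pos[OF p(1) xj(3)])
    moreover have "(sx * x) * (sx * xj) = (sx * sx) * (x * xj)" by (simp only: mult_ac)
    ultimately have sgn: "x * xj > 0" using sx2(1) by simp
    have "hf \<sigma> (x * y) x = hf \<sigma> (x * y) xj"
      by (rule hf_const[OF sm lf m(1) Bmem[OF conjunct2[OF tI[OF tI']]]])
         (use xj xy0 sgn in auto)
    then show ?thesis using sigma_hf[OF xy0, of \<sigma>] hfB[OF tI'] by simp
  qed
  have aC: "a t = C t * EE (- ln c0) (1/2) t" if t: "t \<in> I" for t
  proof -
    have t0: "t \<noteq> 0" "t \<in> J" using tI[OF t] by auto
    have pos: "0 < sx * sy * t" using t Imem by simp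
    have "(sx * xj) * (sx * sy * t) = (sx * sx) * (sy * (xj * t))" by (simp only: mult_ac)
    also have "\<dots> = sy * (xj * t)" using sx2(1) by simp
    finally have e1: "(sx * xj) * (sx * sy * t) = sy * (xj * t)" .
    have sy0: "sy \<noteq> 0" using sy by auto
    have "0 < (sx * xj) * (sx * sy * t) / (sy * yj)"
      by (intro divide_pos_pos mult_pos_pos xj(3) yj(3) pos)
    also have "(sx * xj) * (sx * sy * t) / (sy * yj) = xj * (t / yj)"
      unfolding e1 using sy0 by simp
    finally have sgn: "xj * (t / yj) > 0" .
    have "hf \<sigma> t xj = hf \<sigma> t (t / yj)"
    proof -
      have "hf \<sigma> (xj * (t / xj)) xj = hf \<sigma> (xj * (t / xj)) (t / yj)"
        by (rule hf_const[OF sm lf Bmem[OF t0(2)] Cmem[OF t0(2)]]) (use xj yj t0 sgn in auto)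
      then show ?thesis using xj by simp
    qed
    also have "\<dots> = C t * EE (- ln c0) (1/2) t"
    proof -
      have "t / (t / yj) = yj" using t0 yj by simp
      moreover have "ln \<bar>t / yj\<bar> = ln \<bar>t\<bar> - ln c0" using t0 yj c0 by (simp add: abs_divide ln_div)
      moreover have "t * (ln \<bar>t\<bar> - ln c0) - t / 2 * ln \<bar>t\<bar> = - ln c0 * t + 1/2 * (t * ln \<bar>t\<bar>)"
        by (simp add: algebra_simps)
      ultimately show ?thesis unfolding hf_def C_def EE_def by (simp del: of_real_add of_real_mult of_real_diff of_real_divide)
    qed
    finally show ?thesis using hfB[OF t] by simp
  qed
  define Ct where "Ct t = C t * exp (of_real t * (\<i> * of_real (- ln c0)))" for t
  define Bt where "Bt t = B t * exp (of_real t * (\<i> * of_real (ln c0)))" for t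
  have hCt: "HD J Ct" unfolding Ct_def by (rule HD_mult[OF oJ(1) hC HD_exp_lin])
  have hBt: "HD J Bt" unfolding Bt_def by (rule HD_mult[OF oJ(1) hB HD_exp_lin])
  have aCt: "a t = Ct t * EE 0 (1/2) t" if "t \<in> I" for t
    using aC[OF that] unfolding Ct_def by (subst (asm) EE_split) (simp add: mult.assoc)
  have aBt: "a t = Bt t * EE 0 (-1/2) t" if "t \<in> I" for t
    unfolding a_def Bt_def by (subst EE_split) (simp add: mult.assoc)
  have rel: "Bt t = Ct t * EE 0 1 t" if t: "t \<in> I" for t
  proof -
    have "Bt t = Bt t * (EE 0 (-1/2) t * EE 0 (1/2) t)" by (simp add: EE_mult EE_zero)
    also have "\<dots> = a t * EE 0 (1/2) t" using aBt[OF t] by (simp add: mult.assoc)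
    also have "\<dots> = Ct t * (EE 0 (1/2) t * EE 0 (1/2) t)" using aCt[OF t] by (simp add: mult.assoc)
    also have "\<dots> = Ct t * EE 0 1 t" by (simp add: EE_mult)
    finally show ?thesis .
  qed
  have flatC: "(nth_vderiv n Ct \<longlongrightarrow> 0) (at 0 within I)" for n
    by (rule core_flat[OF oJ I IJ hCt hBt rel]) simp_all
  have flat: "flat_at_0 I a"
    unfolding flat_at_0_def
    by (intro allI flat_transfer[OF I HD_subset[OF hCt IJ] flatC aCt])
  show ?thesis
    by (intro exI[of _ a] conjI HD_imp_smooth[OF oI ha] flat allI impI)
       (use leaf in blast)
qed




inductive Mon :: "(real \<times> real \<Rightarrow> real) \<Rightarrow> bool" where
  Mc: "Mon (\<lambda>z. c)"
| Mx: "Mon (\<lambda>z. fst z)"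
| My: "Mon (\<lambda>z. snd z)"
| Mix: "Mon (\<lambda>z. inverse (fst z))"
| Miy: "Mon (\<lambda>z. inverse (snd z))"
| Mln: "Mon (\<lambda>z. ln \<bar>fst z / snd z\<bar>)"
| Madd: "Mon f \<Longrightarrow> Mon g \<Longrightarrow> Mon (\<lambda>z. f z + g z)"
| Mmul: "Mon f \<Longrightarrow> Mon g \<Longrightarrow> Mon (\<lambda>z. f z * g z)"

lemma lnratio_deriv:
  fixes x y :: real
  assumes "x \<noteq> 0" "y \<noteq> 0"
  shows "((\<lambda>z. ln \<bar>fst z / snd z\<bar>) has_derivative (\<lambda>v. fst v * inverse x + snd v * (- inverse y))) (at (x, y))"
proof -
  have u: "x / y \<noteq> 0" using assms by simp
  have d1: "((\<lambda>z. fst z / snd z) has_derivative (\<lambda>v. (fst v * y - x * snd v) / (y * y))) (at (x, y))"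
    using assms by (auto intro!: derivative_eq_intros simp: field_simps power2_eq_square)
  have u': "fst (x, y) / snd (x, y) \<noteq> 0" using u by simp
  have d2: "((\<lambda>u. ln \<bar>u\<bar>) has_derivative (\<lambda>h. inverse (fst (x, y) / snd (x, y)) * h)) (at (fst (x, y) / snd (x, y)))"
    using DERIV_lnabs[OF u'] unfolding has_field_derivative_def .
  from has_derivative_compose[OF d1 d2]
  have "((\<lambda>z. ln \<bar>fst z / snd z\<bar>) has_derivative (\<lambda>v. inverse (x / y) * ((fst v * y - x * snd v) / (y * y)))) (at (x, y))"
    by (simp only: fst_conv snd_conv)
  moreover have "(\<lambda>v. inverse (x / y) * ((fst v * y - x * snd v) / (y * y))) = (\<lambda>v. fst v * inverse x + snd v * (- inverse y))"
    using assms by (auto simp: fun_eq_iff field_simps)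
  ultimately show ?thesis by simp
qed

definition QQ :: "(real \<times> real) set" where "QQ = {z. fst z \<noteq> 0 \<and> snd z \<noteq> 0}"

lemma Mon_grad:
  "Mon m \<Longrightarrow> \<exists>mx my. Mon mx \<and> Mon my \<and>
     (\<forall>z\<in>QQ. (m has_derivative (\<lambda>v. fst v * mx z + snd v * my z)) (at z))"
proof (induction rule: Mon.induct)
  case (Mc c)
  show ?case by (intro exI[of _ "\<lambda>z. 0"] conjI Mon.Mc) simp
next
  case Mx
  show ?case by (intro exI[of _ "\<lambda>z. 1"] exI[of _ "\<lambda>z. 0"] conjI Mon.Mc) (auto intro!: derivative_eq_intros)
next
  case My
  show ?case by (intro exI[of _ "\<lambda>z. 0"] exI[of _ "\<lambda>z. 1"] conjI Mon.Mc) (auto intro!: derivative_eq_intros)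
next
  case Mix
  have d: "\<forall>z\<in>QQ. ((\<lambda>z. inverse (fst z)) has_derivative (\<lambda>v. fst v * ((-1) * (inverse (fst z) * inverse (fst z))) + snd v * 0)) (at z)"
    unfolding QQ_def by (auto intro!: derivative_eq_intros simp: field_simps)
  have m1: "Mon (\<lambda>z. (-1) * (inverse (fst z) * inverse (fst z)))" by (intro Mon.intros)
  have m2: "Mon (\<lambda>z. 0)" by (intro Mon.intros)
  show ?case by (rule exI[of _ "(\<lambda>z. (-1) * (inverse (fst z) * inverse (fst z)))"], rule exI[of _ "(\<lambda>z. 0)"]) (use m1 m2 d in simp)
next
  case Miy
  have d: "\<forall>z\<in>QQ. ((\<lambda>z. inverse (snd z)) has_derivative (\<lambda>v. fst v * 0 + snd v * ((-1) * (inverse (snd z) * inverse (snd z))))) (at z)"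
    unfolding QQ_def by (auto intro!: derivative_eq_intros simp: field_simps)
  have m1: "Mon (\<lambda>z. 0)" by (intro Mon.intros)
  have m2: "Mon (\<lambda>z. (-1) * (inverse (snd z) * inverse (snd z)))" by (intro Mon.intros)
  show ?case by (rule exI[of _ "(\<lambda>z. 0)"], rule exI[of _ "(\<lambda>z. (-1) * (inverse (snd z) * inverse (snd z)))"]) (use m1 m2 d in simp)
next
  case Mln
  have d: "\<forall>z\<in>QQ. ((\<lambda>z. ln \<bar>fst z / snd z\<bar>) has_derivative (\<lambda>v. fst v * inverse (fst z) + snd v * ((-1) * inverse (snd z)))) (at z)"
  proof
    fix z :: "real \<times> real" assume z: "z \<in> QQ"
    obtain x y where xy: "z = (x, y)" by (cases z)
    have "x \<noteq> 0" "y \<noteq> 0" using z xy unfolding QQ_def by auto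
    from lnratio_deriv[OF this] show "((\<lambda>z. ln \<bar>fst z / snd z\<bar>) has_derivative (\<lambda>v. fst v * inverse (fst z) + snd v * ((-1) * inverse (snd z)))) (at z)"
      using xy by simp
  qed
  have m1: "Mon (\<lambda>z. inverse (fst z))" by (rule Mon.Mix)
  have m2: "Mon (\<lambda>z. (-1) * inverse (snd z))" by (intro Mon.intros)
  show ?case by (rule exI[of _ "\<lambda>z. inverse (fst z)"], rule exI[of _ "\<lambda>z. (-1) * inverse (snd z)"]) (use m1 m2 d in simp)
next
  case (Madd f g)
  then obtain fx fy gx gy where f: "Mon fx" "Mon fy" "\<forall>z\<in>QQ. (f has_derivative (\<lambda>v. fst v * fx z + snd v * fy z)) (at z)"
    and g: "Mon gx" "Mon gy" "\<forall>z\<in>QQ. (g has_derivative (\<lambda>v. fst v * gx z + snd v * gy z)) (at z)" by blast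
  have d: "\<forall>z\<in>QQ. ((\<lambda>z. f z + g z) has_derivative (\<lambda>v. fst v * (fx z + gx z) + snd v * (fy z + gy z))) (at z)"
  proof
    fix z assume z: "z \<in> QQ"
    from has_derivative_add[OF f(3)[rule_format, OF z] g(3)[rule_format, OF z]]
    show "((\<lambda>z. f z + g z) has_derivative (\<lambda>v. fst v * (fx z + gx z) + snd v * (fy z + gy z))) (at z)"
      by (simp add: algebra_simps)
  qed
  show ?case
    apply (rule exI[of _ "\<lambda>z. fx z + gx z"], rule exI[of _ "\<lambda>z. fy z + gy z"])
    using Mon.Madd[OF f(1) g(1)] Mon.Madd[OF f(2) g(2)] d by blast
next
  case (Mmul f g)
  then obtain fx fy gx gy where f: "Mon fx" "Mon fy" "\<forall>z\<in>QQ. (f has_derivative (\<lambda>v. fst v * fx z + snd v * fy z)) (at z)"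
    and g: "Mon gx" "Mon gy" "\<forall>z\<in>QQ. (g has_derivative (\<lambda>v. fst v * gx z + snd v * gy z)) (at z)" by blast
  have d: "\<forall>z\<in>QQ. ((\<lambda>z. f z * g z) has_derivative (\<lambda>v. fst v * (f z * gx z + fx z * g z) + snd v * (f z * gy z + fy z * g z))) (at z)"
  proof
    fix z assume z: "z \<in> QQ"
    from has_derivative_mult[OF f(3)[rule_format, OF z] g(3)[rule_format, OF z]]
    show "((\<lambda>z. f z * g z) has_derivative (\<lambda>v. fst v * (f z * gx z + fx z * g z) + snd v * (f z * gy z + fy z * g z))) (at z)"
      by (simp add: algebra_simps)
  qed
  have m1: "Mon (\<lambda>z. f z * gx z + fx z * g z)" by (intro Mon.intros Mmul.hyps f g)
  have m2: "Mon (\<lambda>z. f z * gy z + fy z * g z)" by (intro Mon.intros Mmul.hyps f g)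
  show ?case
    apply (rule exI[of _ "\<lambda>z. f z * gx z + fx z * g z"], rule exI[of _ "\<lambda>z. f z * gy z + fy z * g z"])
    using m1 m2 d by blast
qed

lemma Mon_bound:
  "Mon m \<Longrightarrow> \<exists>C K. 0 \<le> C \<and> (\<forall>x y. (x, y) \<in> Zset \<epsilon> \<eta> \<and> x \<noteq> 0 \<and> y \<noteq> 0 \<and> \<bar>x * y\<bar> \<le> 1 \<longrightarrow>
       \<bar>m (x, y)\<bar> \<le> C * inverse \<bar>x * y\<bar> ^ K)"
proof (induction rule: Mon.induct)
  case (Mc c)
  show ?case by (intro exI[of _ "\<bar>c\<bar>"] exI[of _ 0]) simp
next
  case Mx
  show ?case
  proof (intro exI[of _ "\<bar>\<epsilon>\<bar>"] exI[of _ 0] conjI allI impI)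
    fix x y assume "(x, y) \<in> Zset \<epsilon> \<eta> \<and> x \<noteq> 0 \<and> y \<noteq> 0 \<and> \<bar>x * y\<bar> \<le> 1"
    then show "\<bar>fst (x, y)\<bar> \<le> \<bar>\<epsilon>\<bar> * inverse \<bar>x * y\<bar> ^ 0" unfolding Zset_def by auto
  qed simp
next
  case My
  show ?case
  proof (intro exI[of _ "\<bar>\<epsilon>\<bar>"] exI[of _ 0] conjI allI impI)
    fix x y assume "(x, y) \<in> Zset \<epsilon> \<eta> \<and> x \<noteq> 0 \<and> y \<noteq> 0 \<and> \<bar>x * y\<bar> \<le> 1"
    then show "\<bar>snd (x, y)\<bar> \<le> \<bar>\<epsilon>\<bar> * inverse \<bar>x * y\<bar> ^ 0" unfolding Zset_def by auto
  qed simp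
next
  case Mix
  show ?case
  proof (intro exI[of _ "\<bar>\<epsilon>\<bar>"] exI[of _ 1] conjI allI impI)
    fix x y assume a: "(x, y) \<in> Zset \<epsilon> \<eta> \<and> x \<noteq> 0 \<and> y \<noteq> 0 \<and> \<bar>x * y\<bar> \<le> 1"
    have "\<bar>inverse x\<bar> = \<bar>y\<bar> * inverse \<bar>x * y\<bar>" using a by (simp add: abs_mult field_simps)
    also have "\<dots> \<le> \<bar>\<epsilon>\<bar> * inverse \<bar>x * y\<bar>" using a unfolding Zset_def by (intro mult_right_mono) auto
    finally show "\<bar>inverse (fst (x, y))\<bar> \<le> \<bar>\<epsilon>\<bar> * inverse \<bar>x * y\<bar> ^ 1" by simp
  qed simp
next
  case Miy
  show ?case
  proof (intro exI[of _ "\<bar>\<epsilon>\<bar>"] exI[of _ 1] conjI allI impI)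
    fix x y assume a: "(x, y) \<in> Zset \<epsilon> \<eta> \<and> x \<noteq> 0 \<and> y \<noteq> 0 \<and> \<bar>x * y\<bar> \<le> 1"
    have "\<bar>inverse y\<bar> = \<bar>x\<bar> * inverse \<bar>x * y\<bar>" using a by (simp add: abs_mult field_simps)
    also have "\<dots> \<le> \<bar>\<epsilon>\<bar> * inverse \<bar>x * y\<bar>" using a unfolding Zset_def by (intro mult_right_mono) auto
    finally show "\<bar>inverse (snd (x, y))\<bar> \<le> \<bar>\<epsilon>\<bar> * inverse \<bar>x * y\<bar> ^ 1" by simp
  qed simp
next
  case Mln
  show ?case
  proof (intro exI[of _ "2 * \<bar>ln \<bar>\<epsilon>\<bar>\<bar> + 1"] exI[of _ 1] conjI allI impI)
    show "0 \<le> 2 * \<bar>ln \<bar>\<epsilon>\<bar>\<bar> + 1" by simp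
    fix x y assume a: "(x, y) \<in> Zset \<epsilon> \<eta> \<and> x \<noteq> 0 \<and> y \<noteq> 0 \<and> \<bar>x * y\<bar> \<le> 1"
    define s where "s = \<bar>x * y\<bar>"
    have s: "0 < s" "s \<le> 1" using a unfolding s_def by auto
    have ax: "\<bar>x\<bar> < \<epsilon>" "\<bar>y\<bar> < \<epsilon>" using a unfolding Zset_def by auto
    have e0: "0 < \<epsilon>" using ax by linarith
    have lx: "ln \<bar>x\<bar> < ln \<epsilon>" "ln \<bar>y\<bar> < ln \<epsilon>" using ax a by auto
    have ls: "ln s = ln \<bar>x\<bar> + ln \<bar>y\<bar>" unfolding s_def using a by (simp add: abs_mult ln_mult)
    have lr: "ln \<bar>x / y\<bar> = ln \<bar>x\<bar> - ln \<bar>y\<bar>" using a by (simp add: abs_divide ln_div)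
    have l1: "- ln s \<le> inverse s" using ln_le_minus_one[of "inverse s"] s by (simp add: ln_inverse)
    have l2: "- ln s \<ge> 0" using s by simp
    have "\<bar>ln \<bar>x / y\<bar>\<bar> \<le> 2 * \<bar>ln \<epsilon>\<bar> + inverse s"
      using lx ls lr l1 l2 by (simp add: abs_le_iff) linarith
    also have "\<dots> \<le> (2 * \<bar>ln \<bar>\<epsilon>\<bar>\<bar> + 1) * inverse s"
    proof -
      have "1 \<le> inverse s" using s by (simp add: one_le_inverse)
      then have "2 * \<bar>ln \<epsilon>\<bar> * 1 \<le> 2 * \<bar>ln \<epsilon>\<bar> * inverse s"
        by (intro mult_left_mono) simp_all
      then show ?thesis using e0 by (simp add: algebra_simps)
    qed
    finally show "\<bar>ln \<bar>fst (x, y) / snd (x, y)\<bar>\<bar> \<le> (2 * \<bar>ln \<bar>\<epsilon>\<bar>\<bar> + 1) * inverse \<bar>x * y\<bar> ^ 1"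
      unfolding s_def by simp
  qed
next
  case (Madd f g)
  then obtain C1 K1 C2 K2 where
    f: "0 \<le> C1" "\<And>x y. (x, y) \<in> Zset \<epsilon> \<eta> \<and> x \<noteq> 0 \<and> y \<noteq> 0 \<and> \<bar>x * y\<bar> \<le> 1 \<Longrightarrow> \<bar>f (x, y)\<bar> \<le> C1 * inverse \<bar>x * y\<bar> ^ K1" and
    g: "0 \<le> C2" "\<And>x y. (x, y) \<in> Zset \<epsilon> \<eta> \<and> x \<noteq> 0 \<and> y \<noteq> 0 \<and> \<bar>x * y\<bar> \<le> 1 \<Longrightarrow> \<bar>g (x, y)\<bar> \<le> C2 * inverse \<bar>x * y\<bar> ^ K2"
    by metis
  show ?case
  proof (intro exI[of _ "C1 + C2"] exI[of _ "max K1 K2"] conjI allI impI)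
    show "0 \<le> C1 + C2" using f g by simp
    fix x y assume a: "(x, y) \<in> Zset \<epsilon> \<eta> \<and> x \<noteq> 0 \<and> y \<noteq> 0 \<and> \<bar>x * y\<bar> \<le> 1"
    have s: "0 < \<bar>x * y\<bar>" "\<bar>x * y\<bar> \<le> 1" using a by auto
    have "\<bar>f (x, y) + g (x, y)\<bar> \<le> C1 * inverse \<bar>x * y\<bar> ^ K1 + C2 * inverse \<bar>x * y\<bar> ^ K2"
      using f(2)[OF a] g(2)[OF a] by linarith
    also have "\<dots> \<le> C1 * inverse \<bar>x * y\<bar> ^ max K1 K2 + C2 * inverse \<bar>x * y\<bar> ^ max K1 K2"
      by (intro add_mono mult_left_mono inv_pow_mono[OF s] f(1) g(1)) simp_all
    finally show "\<bar>f (x, y) + g (x, y)\<bar> \<le> (C1 + C2) * inverse \<bar>x * y\<bar> ^ max K1 K2"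
      by (simp add: algebra_simps)
  qed
next
  case (Mmul f g)
  then obtain C1 K1 C2 K2 where
    f: "0 \<le> C1" "\<And>x y. (x, y) \<in> Zset \<epsilon> \<eta> \<and> x \<noteq> 0 \<and> y \<noteq> 0 \<and> \<bar>x * y\<bar> \<le> 1 \<Longrightarrow> \<bar>f (x, y)\<bar> \<le> C1 * inverse \<bar>x * y\<bar> ^ K1" and
    g: "0 \<le> C2" "\<And>x y. (x, y) \<in> Zset \<epsilon> \<eta> \<and> x \<noteq> 0 \<and> y \<noteq> 0 \<and> \<bar>x * y\<bar> \<le> 1 \<Longrightarrow> \<bar>g (x, y)\<bar> \<le> C2 * inverse \<bar>x * y\<bar> ^ K2"
    by metis
  show ?case
  proof (intro exI[of _ "C1 * C2"] exI[of _ "K1 + K2"] conjI allI impI)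
    show "0 \<le> C1 * C2" using f g by simp
    fix x y assume a: "(x, y) \<in> Zset \<epsilon> \<eta> \<and> x \<noteq> 0 \<and> y \<noteq> 0 \<and> \<bar>x * y\<bar> \<le> 1"
    have "\<bar>f (x, y) * g (x, y)\<bar> = \<bar>f (x, y)\<bar> * \<bar>g (x, y)\<bar>" by (simp add: abs_mult)
    also have "\<dots> \<le> (C1 * inverse \<bar>x * y\<bar> ^ K1) * (C2 * inverse \<bar>x * y\<bar> ^ K2)"
      by (rule mult_mono[OF f(2)[OF a] g(2)[OF a]]) (use f(1) in simp_all)
    finally show "\<bar>f (x, y) * g (x, y)\<bar> \<le> (C1 * C2) * inverse \<bar>x * y\<bar> ^ (K1 + K2)"
      by (simp add: algebra_simps power_add)
  qed
qed




definition FSI :: "real set \<Rightarrow> (real \<Rightarrow> complex) \<Rightarrow> bool" where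
  "FSI I b \<longleftrightarrow> HD I b \<and> (\<forall>k. (nth_vderiv k b \<longlongrightarrow> 0) (at 0 within I))"

lemma FSI_deriv: "FSI I b \<Longrightarrow> FSI I (\<lambda>t. vector_derivative b (at t))"
  unfolding FSI_def by (simp add: HD_deriv nth_vderiv_Suc'[symmetric])

lemma nth_vderiv_cmult:
  fixes b :: "real \<Rightarrow> complex"
  assumes I: "open I" and hb: "HD I b"
  shows "t \<in> I \<Longrightarrow> nth_vderiv k (\<lambda>t. c * b t) t = c * nth_vderiv k b t"
proof (induction k arbitrary: t)
  case 0 then show ?case by simp
next
  case (Suc k t)
  have "((\<lambda>t. c * nth_vderiv k b t) has_vector_derivative c * nth_vderiv (Suc k) b t) (at t)"
    by (rule has_vector_derivative_mult_right[OF HD_has_vd[OF hb Suc.prems]])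
  then have "(nth_vderiv k (\<lambda>t. c * b t) has_vector_derivative c * nth_vderiv (Suc k) b t) (at t)"
    unfolding has_vector_derivative_def
    by (rule has_derivative_transform_within_open[OF _ I Suc.prems]) (simp add: Suc.IH)
  then show ?case by (simp add: nth_vderiv_Suc vector_derivative_at)
qed

lemma FSI_cmult:
  assumes I: "open I" and f: "FSI I b"
  shows "FSI I (\<lambda>t. c * b t)"
proof -
  have hb: "HD I b" using f unfolding FSI_def by blast
  have hcb: "HD I (\<lambda>t. c * b t)" unfolding HD_def
  proof (intro allI ballI)
    fix n t assume t: "t \<in> I"
    have "((\<lambda>t. c * nth_vderiv n b t) has_vector_derivative c * nth_vderiv (Suc n) b t) (at t)"
      by (rule has_vector_derivative_mult_right[OF HD_has_vd[OF hb t]])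
    then have "(\<lambda>t. c * nth_vderiv n b t) differentiable (at t)"
      unfolding has_vector_derivative_def differentiable_def by blast
    then show "nth_vderiv n (\<lambda>t. c * b t) differentiable (at t)"
      using differentiable_cong_open[OF I t, of "nth_vderiv n (\<lambda>t. c * b t)" "\<lambda>t. c * nth_vderiv n b t"]
        nth_vderiv_cmult[OF I hb] by blast
  qed
  have "(nth_vderiv k (\<lambda>t. c * b t) \<longlongrightarrow> 0) (at 0 within I)" for k
  proof -
    have "((\<lambda>t. c * nth_vderiv k b t) \<longlongrightarrow> c * 0) (at 0 within I)"
      using f unfolding FSI_def by (intro tendsto_intros) blast
    moreover have "eventually (\<lambda>t. c * nth_vderiv k b t = nth_vderiv k (\<lambda>t. c * b t) t) (at 0 within I)"
      unfolding eventually_at_filter by (rule always_eventually) (simp add: nth_vderiv_cmult[OF I hb])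
    ultimately show ?thesis using tendsto_cong by fastforce
  qed
  then show ?thesis using hcb unfolding FSI_def by blast
qed

lemma FSI_bound:
  assumes S: "side I \<delta>" and f: "FSI I b"
  shows "\<exists>d>0. \<forall>t\<in>I. \<bar>t\<bar> < d \<longrightarrow> norm (b t) \<le> \<bar>t\<bar>^N"
  using flat_pow_bound[OF S, of b 0 N] f unfolding FSI_def by simp

definition tm :: "(real \<Rightarrow> complex) \<Rightarrow> (real \<times> real \<Rightarrow> real) \<Rightarrow> real \<times> real \<Rightarrow> complex" where
  "tm b m z = b (fst z * snd z) * of_real (m z) * model_phase (fst z) (snd z)"

lemma norm_model_phase[simp]: "norm (model_phase x y) = 1"
proof -
  have "model_phase x y = exp (\<i> * of_real (- (x * y * ln \<bar>x / y\<bar>) / 2))"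
    unfolding model_phase_def by (simp add: algebra_simps)
  then show ?thesis by simp
qed

lemma mp_deriv:
  fixes x y :: real
  assumes xy: "x \<noteq> 0" "y \<noteq> 0"
  shows "((\<lambda>z. model_phase (fst z) (snd z)) has_derivative
     (\<lambda>v. model_phase x y * ((- \<i> / 2) * of_real (fst v * (y * ln \<bar>x / y\<bar> + y) + snd v * (x * ln \<bar>x / y\<bar> + (-1) * x))))) (at (x, y))"
proof -
  have L: "((\<lambda>z. ln \<bar>fst z / snd z\<bar>) has_derivative (\<lambda>v. fst v * inverse x + snd v * (- inverse y))) (at (x, y))"
    by (rule lnratio_deriv[OF xy])
  have w: "((\<lambda>z. fst z * snd z * ln \<bar>fst z / snd z\<bar>) has_derivative
      (\<lambda>v. fst v * (y * ln \<bar>x / y\<bar> + y) + snd v * (x * ln \<bar>x / y\<bar> + (-1) * x))) (at (x, y))"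
  proof -
    have "((\<lambda>z. fst z * snd z * ln \<bar>fst z / snd z\<bar>) has_derivative
      (\<lambda>v. fst (x, y) * snd (x, y) * (fst v * inverse x + snd v * (- inverse y)) + (fst (x, y) * snd v + fst v * snd (x, y)) * ln \<bar>fst (x, y) / snd (x, y)\<bar>)) (at (x, y))"
      by (intro has_derivative_mult L has_derivative_fst has_derivative_snd has_derivative_ident)
    moreover have "(\<lambda>v. fst (x, y) * snd (x, y) * (fst v * inverse x + snd v * (- inverse y)) + (fst (x, y) * snd v + fst v * snd (x, y)) * ln \<bar>fst (x, y) / snd (x, y)\<bar>)
       = (\<lambda>v. fst v * (y * ln \<bar>x / y\<bar> + y) + snd v * (x * ln \<bar>x / y\<bar> + (-1) * x))"
      using xy by (auto simp: fun_eq_iff field_simps)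
    ultimately show ?thesis by simp
  qed
  have h: "((\<lambda>z. (- \<i> / 2) * of_real (fst z * snd z * ln \<bar>fst z / snd z\<bar>)) has_derivative
      (\<lambda>v. (- \<i> / 2) * of_real (fst v * (y * ln \<bar>x / y\<bar> + y) + snd v * (x * ln \<bar>x / y\<bar> + (-1) * x)))) (at (x, y))"
    by (intro has_derivative_mult_right has_derivative_of_real w)
  have e: "(exp has_derivative (\<lambda>h. exp ((- \<i> / 2) * of_real (fst (x, y) * snd (x, y) * ln \<bar>fst (x, y) / snd (x, y)\<bar>)) * h))
       (at ((- \<i> / 2) * of_real (fst (x, y) * snd (x, y) * ln \<bar>fst (x, y) / snd (x, y)\<bar>)))"
    using DERIV_exp unfolding has_field_derivative_def .
  from has_derivative_compose[OF h e]
  show ?thesis unfolding model_phase_def by (simp add: algebra_simps)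
qed

lemma tm_deriv:
  fixes x y :: real
  assumes xy: "x \<noteq> 0" "y \<noteq> 0"
    and hb: "(b has_vector_derivative b') (at (x * y))"
    and hm: "(m has_derivative (\<lambda>v. fst v * mx + snd v * my)) (at (x, y))"
  shows "(tm b m has_derivative (\<lambda>v. of_real (fst v) *
     (b' * of_real (y * m (x, y)) * model_phase x y + b (x * y) * of_real mx * model_phase x y +
      (- \<i> / 2) * b (x * y) * of_real (m (x, y) * (y * ln \<bar>x / y\<bar> + y)) * model_phase x y)
    + of_real (snd v) *
     (b' * of_real (x * m (x, y)) * model_phase x y + b (x * y) * of_real my * model_phase x y +
      (- \<i> / 2) * b (x * y) * of_real (m (x, y) * (x * ln \<bar>x / y\<bar> + (-1) * x)) * model_phase x y))) (at (x, y))"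
proof -
  have s: "((\<lambda>z. fst z * snd z) has_derivative (\<lambda>v. fst (x, y) * snd v + fst v * snd (x, y))) (at (x, y))"
    by (intro has_derivative_mult has_derivative_fst has_derivative_snd has_derivative_ident)
  have hb': "(b has_derivative (\<lambda>h. h *\<^sub>R b')) (at (fst (x, y) * snd (x, y)))"
    using hb unfolding has_vector_derivative_def by simp
  have F1: "((\<lambda>z. b (fst z * snd z)) has_derivative (\<lambda>v. (fst (x, y) * snd v + fst v * snd (x, y)) *\<^sub>R b')) (at (x, y))"
    using has_derivative_compose[OF s hb'] .
  have F2: "((\<lambda>z. complex_of_real (m z)) has_derivative (\<lambda>v. of_real (fst v * mx + snd v * my))) (at (x, y))"
    by (rule has_derivative_of_real[OF hm])
  note F3 = mp_deriv[OF xy]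
  have "(tm b m has_derivative (\<lambda>v.
      (b (fst (x, y) * snd (x, y)) * of_real (m (x, y))) *
        (model_phase x y * ((- \<i> / 2) * of_real (fst v * (y * ln \<bar>x / y\<bar> + y) + snd v * (x * ln \<bar>x / y\<bar> + (-1) * x))))
      + (b (fst (x, y) * snd (x, y)) * of_real (fst v * mx + snd v * my) +
         (fst (x, y) * snd v + fst v * snd (x, y)) *\<^sub>R b' * of_real (m (x, y))) * model_phase (fst (x, y)) (snd (x, y)))) (at (x, y))"
    unfolding tm_def by (intro has_derivative_mult F1 F2 F3)
  then show ?thesis
    by (rule has_derivative_eq_rhs) (simp add: fun_eq_iff scaleR_conv_of_real algebra_simps)
qed




inductive TT :: "real set \<Rightarrow> (real \<times> real \<Rightarrow> complex) \<Rightarrow> bool" for I where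
  TTtm: "FSI I b \<Longrightarrow> Mon m \<Longrightarrow> TT I (tm b m)"
| TTadd: "TT I f \<Longrightarrow> TT I g \<Longrightarrow> TT I (\<lambda>z. f z + g z)"

definition UU :: "real set \<Rightarrow> (real \<times> real) set" where
  "UU I = {z. fst z \<noteq> 0 \<and> snd z \<noteq> 0 \<and> fst z * snd z \<in> I}"

lemma TT_cmult:
  assumes I: "open I"
  shows "TT I f \<Longrightarrow> TT I (\<lambda>z. c * f z)"
proof (induction rule: TT.induct)
  case (TTtm b m)
  have "(\<lambda>z. c * tm b m z) = tm (\<lambda>t. c * b t) m" by (simp add: fun_eq_iff tm_def mult.assoc)
  then show ?case using TT.TTtm[OF FSI_cmult[OF I TTtm(1)] TTtm(2)] by simp
next
  case (TTadd f g)
  have "(\<lambda>z. c * (f z + g z)) = (\<lambda>z. c * f z + c * g z)" by (simp add: fun_eq_iff algebra_simps)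
  then show ?case using TT.TTadd[OF TTadd.IH] by simp
qed

lemma TT_grad:
  assumes I: "open I"
  shows "TT I f \<Longrightarrow> \<exists>fx fy. TT I fx \<and> TT I fy \<and>
     (\<forall>z\<in>UU I. (f has_derivative (\<lambda>v. of_real (fst v) * fx z + of_real (snd v) * fy z)) (at z))"
proof (induction rule: TT.induct)
  case (TTtm b m)
  obtain mx my where mxy: "Mon mx" "Mon my" "\<forall>z\<in>QQ. (m has_derivative (\<lambda>v. fst v * mx z + snd v * my z)) (at z)"
    using Mon_grad[OF TTtm(2)] by blast
  define b' where "b' t = vector_derivative b (at t)" for t
  define c where "c t = (- \<i> / 2) * b t" for t
  have fb': "FSI I b'" unfolding b'_def by (rule FSI_deriv[OF TTtm(1)])
  have fc: "FSI I c" unfolding c_def by (rule FSI_cmult[OF I TTtm(1)])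
  have hb: "HD I b" using TTtm(1) unfolding FSI_def by blast
  define fx where "fx z = tm b' (\<lambda>z. snd z * m z) z + tm b mx z + tm c (\<lambda>z. m z * (snd z * ln \<bar>fst z / snd z\<bar> + snd z)) z" for z
  define fy where "fy z = tm b' (\<lambda>z. fst z * m z) z + tm b my z + tm c (\<lambda>z. m z * (fst z * ln \<bar>fst z / snd z\<bar> + (-1) * fst z)) z" for z
  have "TT I fx" unfolding fx_def
    by (intro TT.TTadd TT.TTtm fb' fc TTtm(1) mxy Mon.intros TTtm(2))
  moreover have "TT I fy" unfolding fy_def
    by (intro TT.TTadd TT.TTtm fb' fc TTtm(1) mxy Mon.intros TTtm(2))
  moreover have "(tm b m has_derivative (\<lambda>v. of_real (fst v) * fx z + of_real (snd v) * fy z)) (at z)"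
    if z: "z \<in> UU I" for z
  proof -
    obtain x y where xy: "z = (x, y)" by (cases z)
    have nz: "x \<noteq> 0" "y \<noteq> 0" "x * y \<in> I" using z xy unfolding UU_def by auto
    have hbv: "(b has_vector_derivative b' (x * y)) (at (x * y))"
      using HD_has_vd[OF hb nz(3), of 0] unfolding b'_def by (simp add: nth_vderiv_Suc)
    have hm: "(m has_derivative (\<lambda>v. fst v * mx (x, y) + snd v * my (x, y))) (at (x, y))"
      using mxy(3) nz unfolding QQ_def by auto
    from tm_deriv[OF nz(1,2) hbv hm] show ?thesis
      unfolding xy fx_def fy_def by (simp add: tm_def c_def mult.assoc)
  qed
  ultimately show ?case by blast
next
  case (TTadd f g)
  then obtain fx fy gx gy where f: "TT I fx" "TT I fy" "\<forall>z\<in>UU I. (f has_derivative (\<lambda>v. of_real (fst v) * fx z + of_real (snd v) * fy z)) (at z)"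
    and g: "TT I gx" "TT I gy" "\<forall>z\<in>UU I. (g has_derivative (\<lambda>v. of_real (fst v) * gx z + of_real (snd v) * gy z)) (at z)" by blast
  have d: "\<forall>z\<in>UU I. ((\<lambda>z. f z + g z) has_derivative (\<lambda>v. of_real (fst v) * (fx z + gx z) + of_real (snd v) * (fy z + gy z))) (at z)"
  proof
    fix z assume z: "z \<in> UU I"
    from has_derivative_add[OF f(3)[rule_format, OF z] g(3)[rule_format, OF z]]
    show "((\<lambda>z. f z + g z) has_derivative (\<lambda>v. of_real (fst v) * (fx z + gx z) + of_real (snd v) * (fy z + gy z))) (at z)"
      by (simp add: algebra_simps)
  qed
  show ?case
    apply (rule exI[of _ "\<lambda>z. fx z + gx z"], rule exI[of _ "\<lambda>z. fy z + gy z"])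
    using TT.TTadd[OF f(1) g(1)] TT.TTadd[OF f(2) g(2)] d by blast
qed

lemma TT_bound:
  assumes S: "side I \<delta>"
  shows "TT I f \<Longrightarrow> \<exists>M d. 0 < d \<and> (\<forall>x y. (x, y) \<in> Zset \<epsilon> \<eta> \<and> x \<noteq> 0 \<and> y \<noteq> 0 \<and> x * y \<in> I \<and> \<bar>x * y\<bar> < d \<longrightarrow>
      norm (f (x, y)) \<le> M * (x * y)^2)"
proof (induction rule: TT.induct)
  case (TTtm b m)
  obtain C K where CK: "0 \<le> C" "\<And>x y. (x, y) \<in> Zset \<epsilon> \<eta> \<and> x \<noteq> 0 \<and> y \<noteq> 0 \<and> \<bar>x * y\<bar> \<le> 1 \<Longrightarrow>
       \<bar>m (x, y)\<bar> \<le> C * inverse \<bar>x * y\<bar> ^ K"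
    using Mon_bound[OF TTtm(2), of \<epsilon> \<eta>] by blast
  obtain d where d: "d > 0" "\<And>t. t \<in> I \<Longrightarrow> \<bar>t\<bar> < d \<Longrightarrow> norm (b t) \<le> \<bar>t\<bar>^(K + 2)"
    using FSI_bound[OF S TTtm(1), of "K + 2"] by blast
  have d0: "0 < min d 1" using d by simp
  have "\<forall>x y. (x, y) \<in> Zset \<epsilon> \<eta> \<and> x \<noteq> 0 \<and> y \<noteq> 0 \<and> x * y \<in> I \<and> \<bar>x * y\<bar> < min d 1 \<longrightarrow>
      norm (tm b m (x, y)) \<le> C * (x * y)^2"
  proof (intro allI impI)
    fix x y assume a: "(x, y) \<in> Zset \<epsilon> \<eta> \<and> x \<noteq> 0 \<and> y \<noteq> 0 \<and> x * y \<in> I \<and> \<bar>x * y\<bar> < min d 1"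
    have s: "0 < \<bar>x * y\<bar>" "\<bar>x * y\<bar> \<le> 1" using a by auto
    have "norm (tm b m (x, y)) = norm (b (x * y)) * \<bar>m (x, y)\<bar>"
      unfolding tm_def by (simp add: norm_mult)
    also have "\<dots> \<le> \<bar>x * y\<bar>^(K + 2) * (C * inverse \<bar>x * y\<bar> ^ K)"
      by (rule mult_mono[OF d(2) CK(2)]) (use a in auto)
    also have "\<dots> = C * (x * y)^2" using s by (simp add: power_add power_inverse field_simps power2_eq_square)
    finally show "norm (tm b m (x, y)) \<le> C * (x * y)^2" .
  qed
  then show ?case using d0 by blast
next
  case (TTadd f g)
  then obtain M1 d1 M2 d2 where
    f: "0 < d1" "\<And>x y. (x, y) \<in> Zset \<epsilon> \<eta> \<and> x \<noteq> 0 \<and> y \<noteq> 0 \<and> x * y \<in> I \<and> \<bar>x * y\<bar> < d1 \<Longrightarrow> norm (f (x, y)) \<le> M1 * (x * y)^2" and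
    g: "0 < d2" "\<And>x y. (x, y) \<in> Zset \<epsilon> \<eta> \<and> x \<noteq> 0 \<and> y \<noteq> 0 \<and> x * y \<in> I \<and> \<bar>x * y\<bar> < d2 \<Longrightarrow> norm (g (x, y)) \<le> M2 * (x * y)^2"
    by metis
  have d0: "0 < min d1 d2" using f g by simp
  have "\<forall>x y. (x, y) \<in> Zset \<epsilon> \<eta> \<and> x \<noteq> 0 \<and> y \<noteq> 0 \<and> x * y \<in> I \<and> \<bar>x * y\<bar> < min d1 d2 \<longrightarrow>
      norm (f (x, y) + g (x, y)) \<le> (M1 + M2) * (x * y)^2"
  proof (intro allI impI)
    fix x y assume a: "(x, y) \<in> Zset \<epsilon> \<eta> \<and> x \<noteq> 0 \<and> y \<noteq> 0 \<and> x * y \<in> I \<and> \<bar>x * y\<bar> < min d1 d2"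
    have "norm (f (x, y) + g (x, y)) \<le> norm (f (x, y)) + norm (g (x, y))" by (rule norm_triangle_ineq)
    also have "\<dots> \<le> M1 * (x * y)^2 + M2 * (x * y)^2" using f(2)[of x y] g(2)[of x y] a by (intro add_mono) auto
    finally show "norm (f (x, y) + g (x, y)) \<le> (M1 + M2) * (x * y)^2" by (simp add: algebra_simps)
  qed
  then show ?case using d0 by blast
qed

lemma open_Zset: "open (Zset \<epsilon> \<eta>)"
proof -
  have "Zset \<epsilon> \<eta> = {z. \<bar>fst z\<bar> < \<epsilon>} \<inter> {z. \<bar>snd z\<bar> < \<epsilon>} \<inter> {z. \<bar>fst z * snd z\<bar> < \<eta>}"
    unfolding Zset_def by auto
  moreover have "open {z::real\<times>real. \<bar>fst z\<bar> < \<epsilon>}" by (intro open_Collect_less continuous_intros)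
  moreover have "open {z::real\<times>real. \<bar>snd z\<bar> < \<epsilon>}" by (intro open_Collect_less continuous_intros)
  moreover have "open {z::real\<times>real. \<bar>fst z * snd z\<bar> < \<eta>}" by (intro open_Collect_less continuous_intros)
  ultimately show ?thesis by (simp add: open_Int)
qed

lemma open_quadrant: "open (quadrant j)"
proof -
  have o1: "open {z::real\<times>real. 0 < fst z}" by (intro open_Collect_less continuous_intros)
  have o2: "open {z::real\<times>real. fst z < 0}" by (intro open_Collect_less continuous_intros)
  have o3: "open {z::real\<times>real. 0 < snd z}" by (intro open_Collect_less continuous_intros)
  have o4: "open {z::real\<times>real. snd z < 0}" by (intro open_Collect_less continuous_intros)
  have e1: "{(x, y). x > 0 \<and> y > 0} = {z::real\<times>real. 0 < fst z} \<inter> {z. 0 < snd z}" by auto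
  have e2: "{(x, y). x < 0 \<and> y > 0} = {z::real\<times>real. fst z < 0} \<inter> {z. 0 < snd z}" by auto
  have e3: "{(x, y). x < 0 \<and> y < 0} = {z::real\<times>real. fst z < 0} \<inter> {z. snd z < 0}" by auto
  have e4: "{(x, y). x > 0 \<and> y < 0} = {z::real\<times>real. 0 < fst z} \<inter> {z. snd z < 0}" by auto
  show ?thesis unfolding quadrant_def e1 e2 e3 e4 using o1 o2 o3 o4 by (simp add: open_Int)
qed

lemma quad_facts:
  assumes "z \<in> Zset \<epsilon> \<eta>" "fst z * snd z \<noteq> 0"
  shows "quad_index z \<in> {1,2,3,4} \<and> z \<in> quadrant (quad_index z) \<and> z \<in> UU (Iint \<eta> (quad_index z))"
proof -
  obtain x y where z: "z = (x, y)" by (cases z)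
  have a: "\<bar>x * y\<bar> < \<eta>" "x \<noteq> 0" "y \<noteq> 0" using assms z unfolding Zset_def by auto
  show ?thesis using a unfolding z quad_index_def quadrant_def UU_def Iint_def
    by (auto simp: mult_pos_pos mult_neg_neg mult_pos_neg mult_neg_pos abs_less_iff zero_less_mult_iff mult_less_0_iff)
qed

lemma quad_index_eq: "j \<in> {1,2,3,4} \<Longrightarrow> z \<in> quadrant j \<Longrightarrow> quad_index z = j"
  unfolding quadrant_def quad_index_def by (auto split: if_splits)

lemma quad_axis: "j \<in> {1,2,3,4} \<Longrightarrow> z \<in> quadrant j \<Longrightarrow> fst z * snd z \<noteq> 0"
  unfolding quadrant_def by (auto split: if_splits)

lemma side_Iint: "0 < \<eta> \<Longrightarrow> side (Iint \<eta> j) \<eta>"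
  unfolding side_def Iint_def by auto




lemma axis_prod_bound:
  fixes z w :: "real \<times> real"
  assumes "fst z * snd z = 0" "norm (w - z) \<le> 1"
  shows "\<bar>fst w * snd w\<bar> \<le> (norm z + 1) * norm (w - z)"
proof -
  have f1: "\<bar>fst w - fst z\<bar> \<le> norm (w - z)" using norm_fst_le[of "fst w - fst z" "snd w - snd z"]
    by (cases w, cases z) simp
  have f2: "\<bar>snd w - snd z\<bar> \<le> norm (w - z)" using norm_snd_le[of "snd w - snd z" "fst w - fst z"]
    by (cases w, cases z) simp
  have f1': "\<bar>fst w - fst z\<bar> \<le> norm (w - z)" using f1 .
  have z1: "\<bar>fst z\<bar> \<le> norm z" using norm_fst_le[of "fst z" "snd z"] by simp
  have z2: "\<bar>snd z\<bar> \<le> norm z" using norm_snd_le[of "snd z" "fst z"] by (cases z) simp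
  from assms(1) consider "fst z = 0" | "snd z = 0" by auto
  then show ?thesis
  proof cases
    case 1
    have "\<bar>snd w\<bar> \<le> norm z + 1" using f2 z2 assms(2) by linarith
    moreover have "\<bar>fst w\<bar> \<le> norm (w - z)" using f1 1 by simp
    ultimately have "\<bar>fst w\<bar> * \<bar>snd w\<bar> \<le> norm (w - z) * (norm z + 1)"
      by (intro mult_mono) simp_all
    then show ?thesis by (simp add: abs_mult mult.commute)
  next
    case 2
    have "\<bar>fst w\<bar> \<le> norm z + 1" using f1 z1 assms(2) by linarith
    moreover have "\<bar>snd w\<bar> \<le> norm (w - z)" using f2 2 by simp
    ultimately have "\<bar>fst w\<bar> * \<bar>snd w\<bar> \<le> (norm z + 1) * norm (w - z)"
      by (intro mult_mono) simp_all
    then show ?thesis by (simp add: abs_mult)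
  qed
qed

lemma zero_deriv_from_bound:
  fixes g :: "real \<times> real \<Rightarrow> complex"
  assumes Z: "open Z" "z \<in> Z" and ax: "fst z * snd z = 0" and gz: "g z = 0"
    and M: "0 \<le> M" "0 < d" "\<And>w. w \<in> Z \<Longrightarrow> \<bar>fst w * snd w\<bar> < d \<Longrightarrow> norm (g w) \<le> M * (fst w * snd w)^2"
  shows "(g has_derivative (\<lambda>v. 0)) (at z)"
  unfolding has_derivative_at_alt
proof (intro conjI allI impI bounded_linear_zero)
  fix e :: real assume e: "e > 0"
  obtain r0 where r0: "r0 > 0" "ball z r0 \<subseteq> Z" using Z open_contains_ball by blast
  define K where "K = norm z + 1"
  have K: "K > 0" unfolding K_def by (simp add: add_nonneg_pos)
  define r where "r = min (min r0 1) (min (d / K) (e / (M * K^2 + 1)))"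
  have r: "r > 0" using r0 K M e unfolding r_def by (simp add: add_nonneg_pos)
  show "\<exists>r>0. \<forall>w. norm (w - z) < r \<longrightarrow> norm (g w - g z - 0) \<le> e * norm (w - z)"
  proof (intro exI[of _ r] conjI r allI impI)
    fix w assume w: "norm (w - z) < r"
    have wZ: "w \<in> Z" using w r0 unfolding r_def by (auto simp: dist_norm norm_minus_commute)
    have w1: "norm (w - z) \<le> 1" using w unfolding r_def by simp
    have pb: "\<bar>fst w * snd w\<bar> \<le> K * norm (w - z)" using axis_prod_bound[OF ax w1] unfolding K_def .
    have "K * norm (w - z) < K * (d / K)" using w K unfolding r_def by (intro mult_strict_left_mono) auto
    then have pd: "\<bar>fst w * snd w\<bar> < d" using pb K by simp
    have "norm (g w) \<le> M * (fst w * snd w)^2" by (rule M(3)[OF wZ pd])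
    also have "\<dots> \<le> M * (K * norm (w - z))^2"
      using pb by (intro mult_left_mono M(1) power_mono[where n=2, of "\<bar>fst w * snd w\<bar>", simplified]) simp_all
    also have "\<dots> = (M * K^2 * norm (w - z)) * norm (w - z)" by (simp add: power2_eq_square algebra_simps)
    also have "\<dots> \<le> e * norm (w - z)"
    proof (rule mult_right_mono)
      have "M * K^2 * norm (w - z) \<le> M * K^2 * (e / (M * K^2 + 1))"
        using w unfolding r_def by (intro mult_left_mono) (simp_all add: M(1))
      also have "\<dots> \<le> e"
      proof -
        have pos: "0 < M * K^2 + 1" using M(1) by (simp add: add_nonneg_pos)
        have "M * K^2 \<le> M * K^2 + 1" by simp
        then have le: "M * K^2 * e \<le> e * (M * K^2 + 1)" using e by (simp add: mult_right_mono mult.commute)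
        have "M * K^2 * (e / (M * K^2 + 1)) = (M * K^2 * e) / (M * K^2 + 1)" by simp
        also have "\<dots> \<le> e" using le pos by (simp add: pos_divide_le_eq)
        finally show ?thesis .
      qed
      finally show "M * K^2 * norm (w - z) \<le> e" .
    qed simp
    finally show "norm (g w - g z - 0) \<le> e * norm (w - z)" using gz by simp
  qed
qed




lemma part_ii:
  fixes a :: "nat \<Rightarrow> real \<Rightarrow> complex" and \<epsilon> \<eta> :: real
  assumes eta: "0 < \<eta>"
    and ha: "\<forall>j\<in>{1,2,3,4}. smooth_on (Iint \<eta> j) (a j) \<and> flat_at_0 (Iint \<eta> j) (a j)"
  shows "smooth_on (Zset \<epsilon> \<eta>) (\<lambda>(x, y). if x * y = 0 then 0 else a (quad_index (x, y)) (x * y) * model_phase x y) \<and>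
         leafwise_flat (Zset \<epsilon> \<eta>) (\<lambda>(x, y). if x * y = 0 then 0 else a (quad_index (x, y)) (x * y) * model_phase x y)"
proof -
  define Z where "Z = Zset \<epsilon> \<eta>"
  define \<sigma> where "\<sigma> = (\<lambda>(x, y). if x * y = 0 then 0 else a (quad_index (x, y)) (x * y) * model_phase x y)"
  have oZ: "open Z" unfolding Z_def by (rule open_Zset)
  have sI: "\<And>j. side (Iint \<eta> j) \<eta>" by (rule side_Iint[OF eta])
  have oI: "\<And>j. open (Iint \<eta> j)" using side_open[OF sI] .
  have fa: "FSI (Iint \<eta> j) (a j)" if j: "j \<in> {1,2,3,4}" for j
    using ha j smooth_imp_HD[OF oI] unfolding FSI_def flat_at_0_def by blast
  have oZQ: "\<And>j. open (Z \<inter> quadrant j)" using oZ open_quadrant by blast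
  have qq: "fst z * snd z \<noteq> 0 \<and> quad_index z = j \<and> z \<in> UU (Iint \<eta> j) \<and> z \<in> Z"
    if "j \<in> {1,2,3,4}" "z \<in> Z \<inter> quadrant j" for j z
    using quad_axis[OF that(1)] quad_index_eq[OF that(1)] quad_facts[of z \<epsilon> \<eta>] that unfolding Z_def by auto
  define P where "P g \<longleftrightarrow> (\<forall>z\<in>Z. fst z * snd z = 0 \<longrightarrow> g z = 0) \<and>
      (\<forall>j\<in>{1,2,3,4}. \<exists>f. TT (Iint \<eta> j) f \<and> (\<forall>z\<in>Z \<inter> quadrant j. g z = f z))" for g
  have \<sigma>q: "\<sigma> z = tm (a j) (\<lambda>z. 1) z" if "j \<in> {1,2,3,4}" "z \<in> Z \<inter> quadrant j" for j z
  proof -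
    obtain x y where z: "z = (x, y)" by (cases z)
    show ?thesis using qq[OF that] unfolding z \<sigma>_def tm_def by simp
  qed
  have P\<sigma>: "P \<sigma>" unfolding P_def
  proof (intro conjI ballI impI)
    fix z assume "z \<in> Z" "fst z * snd z = 0"
    then show "\<sigma> z = 0" unfolding \<sigma>_def by (cases z) simp
  next
    fix j :: nat assume j: "j \<in> {1,2,3,4}"
    show "\<exists>f. TT (Iint \<eta> j) f \<and> (\<forall>z\<in>Z \<inter> quadrant j. \<sigma> z = f z)"
      by (intro exI[of _ "tm (a j) (\<lambda>z. 1)"] conjI TT.TTtm fa[OF j] Mon.Mc ballI \<sigma>q[OF j])
  qed
  have qbound: "\<exists>M d. 0 < d \<and> (\<forall>w\<in>Z \<inter> quadrant j. \<bar>fst w * snd w\<bar> < d \<longrightarrow> norm (g w) \<le> M * (fst w * snd w)^2)"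
    if Pg: "P g" and j: "j \<in> {1,2,3,4}" for g j
  proof -
    obtain f where f: "TT (Iint \<eta> j) f" "\<forall>z\<in>Z \<inter> quadrant j. g z = f z" using Pg j unfolding P_def by blast
    obtain M d where Md: "0 < d" "\<forall>x y. (x, y) \<in> Zset \<epsilon> \<eta> \<and> x \<noteq> 0 \<and> y \<noteq> 0 \<and> x * y \<in> Iint \<eta> j \<and> \<bar>x * y\<bar> < d \<longrightarrow>
      norm (f (x, y)) \<le> M * (x * y)^2" using TT_bound[OF sI f(1), of \<epsilon> \<eta>] by blast
    have "norm (g w) \<le> M * (fst w * snd w)^2" if w: "w \<in> Z \<inter> quadrant j" "\<bar>fst w * snd w\<bar> < d" for w
    proof -
      obtain x y where wxy: "w = (x, y)" by (cases w)
      have "x \<noteq> 0" "y \<noteq> 0" "x * y \<in> Iint \<eta> j" "(x, y) \<in> Zset \<epsilon> \<eta>"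
        using qq[OF j w(1)] unfolding wxy UU_def Z_def by auto
      then show ?thesis using Md(2) w f(2) unfolding wxy by auto
    qed
    then show ?thesis using Md(1) by blast
  qed
  have bound: "\<exists>M d. 0 \<le> M \<and> 0 < d \<and> (\<forall>w\<in>Z. \<bar>fst w * snd w\<bar> < d \<longrightarrow> norm (g w) \<le> M * (fst w * snd w)^2)"
    if Pg: "P g" for g
  proof -
    obtain M1 d1 where b1: "0 < d1" "\<forall>w\<in>Z \<inter> quadrant 1. \<bar>fst w * snd w\<bar> < d1 \<longrightarrow> norm (g w) \<le> M1 * (fst w * snd w)^2"
      using qbound[OF Pg, of 1] by auto
    obtain M2 d2 where b2: "0 < d2" "\<forall>w\<in>Z \<inter> quadrant 2. \<bar>fst w * snd w\<bar> < d2 \<longrightarrow> norm (g w) \<le> M2 * (fst w * snd w)^2"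
      using qbound[OF Pg, of 2] by auto
    obtain M3 d3 where b3: "0 < d3" "\<forall>w\<in>Z \<inter> quadrant 3. \<bar>fst w * snd w\<bar> < d3 \<longrightarrow> norm (g w) \<le> M3 * (fst w * snd w)^2"
      using qbound[OF Pg, of 3] by auto
    obtain M4 d4 where b4: "0 < d4" "\<forall>w\<in>Z \<inter> quadrant 4. \<bar>fst w * snd w\<bar> < d4 \<longrightarrow> norm (g w) \<le> M4 * (fst w * snd w)^2"
      using qbound[OF Pg, of 4] by auto
    define M where "M = \<bar>M1\<bar> + \<bar>M2\<bar> + \<bar>M3\<bar> + \<bar>M4\<bar>"
    define d where "d = min (min d1 d2) (min d3 d4)"
    have "norm (g w) \<le> M * (fst w * snd w)^2" if w: "w \<in> Z" "\<bar>fst w * snd w\<bar> < d" for w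
    proof (cases "fst w * snd w = 0")
      case True
      then have "g w = 0" using Pg w unfolding P_def by blast
      then show ?thesis unfolding M_def by simp
    next
      case False
      have jq: "quad_index w \<in> {1,2,3,4}" "w \<in> quadrant (quad_index w)"
        using quad_facts[of w \<epsilon> \<eta>] False w unfolding Z_def by auto
      have sq: "0 \<le> (fst w * snd w)^2" by simp
      from jq(1) consider "quad_index w = 1" | "quad_index w = 2" | "quad_index w = 3" | "quad_index w = 4" by auto
      then show ?thesis
      proof cases
        case 1
        then have "norm (g w) \<le> M1 * (fst w * snd w)^2" using b1 w jq unfolding d_def by auto
        also have "\<dots> \<le> M * (fst w * snd w)^2" unfolding M_def by (intro mult_right_mono sq) simp
        finally show ?thesis .
      next
        case 2
        then have "norm (g w) \<le> M2 * (fst w * snd w)^2" using b2 w jq unfolding d_def by auto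
        also have "\<dots> \<le> M * (fst w * snd w)^2" unfolding M_def by (intro mult_right_mono sq) simp
        finally show ?thesis .
      next
        case 3
        then have "norm (g w) \<le> M3 * (fst w * snd w)^2" using b3 w jq unfolding d_def by auto
        also have "\<dots> \<le> M * (fst w * snd w)^2" unfolding M_def by (intro mult_right_mono sq) simp
        finally show ?thesis .
      next
        case 4
        then have "norm (g w) \<le> M4 * (fst w * snd w)^2" using b4 w jq unfolding d_def by auto
        also have "\<dots> \<le> M * (fst w * snd w)^2" unfolding M_def by (intro mult_right_mono sq) simp
        finally show ?thesis .
      qed
    qed
    moreover have "0 \<le> M" "0 < d" using b1 b2 b3 b4 unfolding M_def d_def by auto
    ultimately show ?thesis by blast
  qed
  have da: "(g has_derivative (\<lambda>v. 0)) (at z)" if Pg: "P g" and z: "z \<in> Z" "fst z * snd z = 0" for g z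
  proof -
    obtain M d where Md: "0 \<le> M" "0 < d" "\<forall>w\<in>Z. \<bar>fst w * snd w\<bar> < d \<longrightarrow> norm (g w) \<le> M * (fst w * snd w)^2"
      using bound[OF Pg] by blast
    have "g z = 0" using Pg z unfolding P_def by blast
    then show ?thesis by (rule zero_deriv_from_bound[OF oZ z(1) z(2) _ Md(1,2)]) (use Md(3) in blast)
  qed
  have dq: "\<exists>fx fy. TT (Iint \<eta> j) fx \<and> TT (Iint \<eta> j) fy \<and>
      (\<forall>z\<in>Z \<inter> quadrant j. (g has_derivative (\<lambda>v. of_real (fst v) * fx z + of_real (snd v) * fy z)) (at z))"
    if Pg: "P g" and j: "j \<in> {1,2,3,4}" for g j
  proof -
    obtain f where f: "TT (Iint \<eta> j) f" "\<forall>z\<in>Z \<inter> quadrant j. g z = f z" using Pg j unfolding P_def by blast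
    obtain fx fy where fxy: "TT (Iint \<eta> j) fx" "TT (Iint \<eta> j) fy"
      "\<forall>z\<in>UU (Iint \<eta> j). (f has_derivative (\<lambda>v. of_real (fst v) * fx z + of_real (snd v) * fy z)) (at z)"
      using TT_grad[OF oI f(1)] by blast
    have "(g has_derivative (\<lambda>v. of_real (fst v) * fx z + of_real (snd v) * fy z)) (at z)" if z: "z \<in> Z \<inter> quadrant j" for z
    proof -
      have "z \<in> UU (Iint \<eta> j)" using qq[OF j z] by blast
      then have "(f has_derivative (\<lambda>v. of_real (fst v) * fx z + of_real (snd v) * fy z)) (at z)" using fxy(3) by blast
      then show ?thesis by (rule has_derivative_transform_within_open[OF _ oZQ z]) (use f(2) in simp)
    qed
    then show ?thesis using fxy(1,2) by blast
  qed
  have diffP: "g differentiable (at z)" if Pg: "P g" and z: "z \<in> Z" for g z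
  proof (cases "fst z * snd z = 0")
    case True then show ?thesis using da[OF Pg z True] unfolding differentiable_def by blast
  next
    case False
    have jq: "quad_index z \<in> {1,2,3,4}" "z \<in> quadrant (quad_index z)"
      using quad_facts[of z \<epsilon> \<eta>] False z unfolding Z_def by auto
    then show ?thesis using dq[OF Pg jq(1)] z unfolding differentiable_def by blast
  qed
  have smooth: "smooth_on Z \<sigma>"
  proof (rule smooth_on_coind[where P=P, OF _ P\<sigma>])
    fix g assume Pg: "P g"
    have d: "\<forall>z\<in>Z. g differentiable (at z)" using diffP[OF Pg] by blast
    have c: "continuous_on Z g"
      by (intro continuous_at_imp_continuous_on ballI differentiable_imp_continuous_within) (use d in blast)
    have "P (\<lambda>z. frechet_derivative g (at z) v)" for v
      unfolding P_def
    proof (intro conjI ballI impI)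
      fix z assume z: "z \<in> Z" "fst z * snd z = 0"
      have "frechet_derivative g (at z) = (\<lambda>v. 0)" using frechet_derivative_at[OF da[OF Pg z]] by simp
      then show "frechet_derivative g (at z) v = 0" by simp
    next
      fix j :: nat assume j: "j \<in> {1,2,3,4}"
      obtain fx fy where fxy: "TT (Iint \<eta> j) fx" "TT (Iint \<eta> j) fy"
        "\<forall>z\<in>Z \<inter> quadrant j. (g has_derivative (\<lambda>v. of_real (fst v) * fx z + of_real (snd v) * fy z)) (at z)"
        using dq[OF Pg j] by blast
      show "\<exists>f. TT (Iint \<eta> j) f \<and> (\<forall>z\<in>Z \<inter> quadrant j. frechet_derivative g (at z) v = f z)"
      proof (intro exI[of _ "\<lambda>z. of_real (fst v) * fx z + of_real (snd v) * fy z"] conjI ballI)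
        show "TT (Iint \<eta> j) (\<lambda>z. of_real (fst v) * fx z + of_real (snd v) * fy z)"
          by (intro TT.TTadd TT_cmult[OF oI] fxy(1,2))
        fix z assume z: "z \<in> Z \<inter> quadrant j"
        have "frechet_derivative g (at z) = (\<lambda>v. of_real (fst v) * fx z + of_real (snd v) * fy z)"
          using frechet_derivative_at[OF fxy(3)[rule_format, OF z]] by simp
        then show "frechet_derivative g (at z) v = of_real (fst v) * fx z + of_real (snd v) * fy z" by simp
      qed
    qed
    then show "continuous_on Z g \<and> (\<forall>z\<in>Z. g differentiable (at z)) \<and>
        (\<forall>v. P (\<lambda>z. frechet_derivative g (at z) v))" using c d by blast
  qed
  have lf: "leafwise_flat Z \<sigma>"
    unfolding leafwise_flat_def
  proof (intro ballI allI)
    fix z t assume z: "z \<in> Z"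
    show "nabla \<sigma> z (t *\<^sub>R leaf_field z) = 0"
    proof (cases "fst z * snd z = 0")
      case True
      have "\<sigma> z = 0" using P\<sigma> z True unfolding P_def by blast
      moreover have "frechet_derivative \<sigma> (at z) = (\<lambda>v. 0)" using frechet_derivative_at[OF da[OF P\<sigma> z True]] by simp
      ultimately show ?thesis unfolding nabla_def by simp
    next
      case False
      define j where "j = quad_index z"
      have jq: "j \<in> {1,2,3,4}" "z \<in> Z \<inter> quadrant j"
        using quad_facts[of z \<epsilon> \<eta>] False z unfolding Z_def j_def by auto
      obtain x y where xy: "z = (x, y)" by (cases z)
      have nz: "x \<noteq> 0" "y \<noteq> 0" "x * y \<in> Iint \<eta> j" using qq[OF jq] unfolding xy UU_def by auto
      have hb: "HD (Iint \<eta> j) (a j)" using fa[OF jq(1)] unfolding FSI_def by blast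
      have hbv: "(a j has_vector_derivative nth_vderiv 1 (a j) (x * y)) (at (x * y))"
        using HD_has_vd[OF hb nz(3), of 0] by simp
      have hm: "((\<lambda>z. 1::real) has_derivative (\<lambda>v. fst v * 0 + snd v * 0)) (at (x, y))" by simp
      note D = tm_deriv[OF nz(1,2) hbv hm]
      have jq2: "(x, y) \<in> Z \<inter> quadrant j" using jq(2) xy by simp
      have F: "frechet_derivative \<sigma> (at (x, y)) = (\<lambda>v. of_real (fst v) *
     (nth_vderiv 1 (a j) (x * y) * of_real (y * 1) * model_phase x y + a j (x * y) * of_real 0 * model_phase x y +
      (- \<i> / 2) * a j (x * y) * of_real (1 * (y * ln \<bar>x / y\<bar> + y)) * model_phase x y)
    + of_real (snd v) *
     (nth_vderiv 1 (a j) (x * y) * of_real (x * 1) * model_phase x y + a j (x * y) * of_real 0 * model_phase x y +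
      (- \<i> / 2) * a j (x * y) * of_real (1 * (x * ln \<bar>x / y\<bar> + (-1) * x)) * model_phase x y))"
        apply (rule frechet_derivative_at[symmetric])
        apply (rule has_derivative_transform_within_open[OF D oZQ jq2])
        using \<sigma>q[OF jq(1)] by simp
      have sz: "\<sigma> z = a j (x * y) * model_phase x y" using \<sigma>q[OF jq] unfolding xy tm_def by simp
      show ?thesis unfolding xy nabla_def F sz[unfolded xy] leaf_field_def Theta_def
        by (simp add: algebra_simps)
    qed
  qed
  show ?thesis using smooth lf unfolding Z_def \<sigma>_def by blast
qed




lemma nth_vderiv_zero: "nth_vderiv n (\<lambda>t::real. 0::complex) = (\<lambda>t. 0)"
proof (induction n)
  case 0 then show ?case by simp
next
  case (Suc n)
  show ?case by (rule ext) (simp add: nth_vderiv_Suc Suc.IH)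
qed

lemma part_i:
  fixes \<sigma> :: "real \<times> real \<Rightarrow> complex"
  assumes eta: "0 < \<eta>" "\<eta> < \<epsilon>\<^sup>2"
    and sm: "smooth_on (Zset \<epsilon> \<eta>) \<sigma>" and lf: "leafwise_flat (Zset \<epsilon> \<eta>) \<sigma>"
  shows "\<exists>a::nat \<Rightarrow> real \<Rightarrow> complex. \<forall>j\<in>{1,2,3,4}.
                smooth_on (Iint \<eta> j) (a j) \<and> flat_at_0 (Iint \<eta> j) (a j) \<and>
                (\<forall>x y. (x, y) \<in> Zset \<epsilon> \<eta> \<inter> quadrant j \<longrightarrow>
                        \<sigma> (x, y) = a j (x * y) * model_phase x y)"
proof (cases "\<epsilon> > 0")
  case False
  have empty: "Zset \<epsilon> \<eta> = {}" using False unfolding Zset_def by auto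
  have oI: "\<And>j. open (Iint \<eta> j)" using side_open[OF side_Iint[OF eta(1)]] .
  have hd: "HD (Iint \<eta> j) (\<lambda>t. 0::complex)" for j
    unfolding HD_def nth_vderiv_zero by simp
  have sm0: "smooth_on (Iint \<eta> j) (\<lambda>t::real. 0::complex)" for j :: nat
    by (rule HD_imp_smooth[OF oI hd])
  have fl0: "flat_at_0 (Iint \<eta> j) (\<lambda>t::real. 0::complex)" for j :: nat
    unfolding flat_at_0_def nth_vderiv_zero by simp
  show ?thesis
    by (rule exI[of _ "\<lambda>(j::nat) (t::real). 0::complex"]) (simp add: sm0 fl0 empty)
next
  case True
  note pij = part_i_j[OF eta True sm lf]
  have "\<forall>j\<in>{1,2,3,4}. \<exists>b. smooth_on (Iint \<eta> j) b \<and> flat_at_0 (Iint \<eta> j) b \<and>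
     (\<forall>x y. (x, y) \<in> Zset \<epsilon> \<eta> \<inter> quadrant j \<longrightarrow> \<sigma> (x, y) = b (x * y) * model_phase x y)"
  proof
    fix j :: nat assume j: "j \<in> {1,2,3,4}"
    have sI: "side (Iint \<eta> j) \<eta>" by (rule side_Iint[OF eta(1)])
    from j consider "j = 1" | "j = 2" | "j = 3" | "j = 4" by auto
    then show "\<exists>b. smooth_on (Iint \<eta> j) b \<and> flat_at_0 (Iint \<eta> j) b \<and>
     (\<forall>x y. (x, y) \<in> Zset \<epsilon> \<eta> \<inter> quadrant j \<longrightarrow> \<sigma> (x, y) = b (x * y) * model_phase x y)"
    proof cases
      case 1
      show ?thesis by (rule pij[of 1 1, OF _ _ sI]) (auto simp: 1 Iint_def quadrant_def)
    next
      case 2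
      show ?thesis by (rule pij[of "-1" 1, OF _ _ sI]) (auto simp: 2 Iint_def quadrant_def)
    next
      case 3
      show ?thesis by (rule pij[of "-1" "-1", OF _ _ sI]) (auto simp: 3 Iint_def quadrant_def)
    next
      case 4
      show ?thesis by (rule pij[of 1 "-1", OF _ _ sI]) (auto simp: 4 Iint_def quadrant_def)
    qed
  qed
  then show ?thesis by (rule bchoice)
qed

theorem proposition11:
  fixes \<epsilon> \<eta> :: real
  assumes "0 < \<eta>" and "\<eta> < \<epsilon>\<^sup>2"
  shows "(\<forall>\<sigma>::real \<times> real \<Rightarrow> complex.
            smooth_on (Zset \<epsilon> \<eta>) \<sigma> \<and> leafwise_flat (Zset \<epsilon> \<eta>) \<sigma> \<longrightarrow>
            (\<exists>a::nat \<Rightarrow> real \<Rightarrow> complex. \<forall>j\<in>{1,2,3,4}.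
                smooth_on (Iint \<eta> j) (a j) \<and> flat_at_0 (Iint \<eta> j) (a j) \<and>
                (\<forall>x y. (x, y) \<in> Zset \<epsilon> \<eta> \<inter> quadrant j \<longrightarrow>
                        \<sigma> (x, y) = a j (x * y) * model_phase x y)))
       \<and>
         (\<forall>a::nat \<Rightarrow> real \<Rightarrow> complex.
            (\<forall>j\<in>{1,2,3,4}. smooth_on (Iint \<eta> j) (a j) \<and> flat_at_0 (Iint \<eta> j) (a j)) \<longrightarrow>
            (let \<sigma> = (\<lambda>(x, y). if x * y = 0 then 0
                                else a (quad_index (x, y)) (x * y) * model_phase x y)
             in smooth_on (Zset \<epsilon> \<eta>) \<sigma> \<and> leafwise_flat (Zset \<epsilon> \<eta>) \<sigma>))"
proof (intro conjI allI impI)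
  fix \<sigma> :: "real \<times> real \<Rightarrow> complex"
  assume "smooth_on (Zset \<epsilon> \<eta>) \<sigma> \<and> leafwise_flat (Zset \<epsilon> \<eta>) \<sigma>"
  then show "\<exists>a::nat \<Rightarrow> real \<Rightarrow> complex. \<forall>j\<in>{1,2,3,4}.
                smooth_on (Iint \<eta> j) (a j) \<and> flat_at_0 (Iint \<eta> j) (a j) \<and>
                (\<forall>x y. (x, y) \<in> Zset \<epsilon> \<eta> \<inter> quadrant j \<longrightarrow>
                        \<sigma> (x, y) = a j (x * y) * model_phase x y)"
    using part_i[OF assms] by blast
next
  fix a :: "nat \<Rightarrow> real \<Rightarrow> complex"
  assume "\<forall>j\<in>{1,2,3,4}. smooth_on (Iint \<eta> j) (a j) \<and> flat_at_0 (Iint \<eta> j) (a j)"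
  from part_ii[OF assms(1) this, of \<epsilon>]
  show "let \<sigma> = (\<lambda>(x, y). if x * y = 0 then 0
                                else a (quad_index (x, y)) (x * y) * model_phase x y)
             in smooth_on (Zset \<epsilon> \<eta>) \<sigma> \<and> leafwise_flat (Zset \<epsilon> \<eta>) \<sigma>"
    unfolding Let_def .
qed


end
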